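(* Let $Q$ be a non-empty quasi-order. The quasi-orders $(\mathsf{T_f}(Q),\le_T)$ and $(i^F_{\omega^\omega}(Q),\preceq)$ are equivalent. That is, there are maps $f:\mathsf{T_f}(Q)\to i^F_{\omega^\omega}(Q)$ and $g: i^F_{\omega^\omega}(Q)\to\mathsf{T_f}(Q)$ with the following properties: - both are order-embeddings, i.e. $x\le y\iff f(x)\le f(y)$, and likewise for $g$; - $g(f(\tau))\equiv\tau$ for all $\tau\in\mathsf{T_f}(Q)$; - $f(g(\sigma))\equiv\sigma$ for all $\sigma\in i^F_{\omega^\omega}(Q)$. Here $a\equiv b$ means $a\le b$ and $b\le a$.
   Context: A quasi-order is a set with a reflexive, transitive relation. Trees: $\mathsf{T_f}(Q)$ is the smallest class containing the leaf $\cdot q$ for each $q\in Q$, and containing $\cdot(\tau_0,\dots,\tau_{k-1})$ (an unlabelled root whose children are the $\tau_i$) for every finite set $\{\tau_0,\dots,\tau_{k-1}\}\subseteq\mathsf{T_f}(Q)$ with $k\ge1$. Its order $\le_T$ is defined recursively: - $\cdot x\le_T\cdot y$ iff $x\le_Q y$; - $\cdot x\le_T\cdot(\tau_j)_{j<l}$ iff $\cdot x\le_T\tau_j$ for some $j$; - $\cdot(\sigma_i)_{i<k}\le_T\cdot(\tau_j)_{j<l}$ iff every $\sigma_i$ is $\le_T$ some $\tau_j$; - a non-leaf tree is never $\le_T$ a leaf. Sequences: a transfinite sequence over $Q$ of length $\alpha$ (with $\alpha\neq0$ an ordinal) is a function $\sigma:\alpha\to Q$, and $|\sigma|=\alpha$.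 Define $\sigma\preceq\tau$ if there is a strictly increasing $f:|\sigma|\to|\tau|$ with $\sigma(i)\le_Q\tau(f(i))$ for all $i$. Finite range means the sequence takes finitely many values. A proper tail of $\sigma$ is $i\mapsto\sigma(\delta+i)$ for some $0<\delta<|\sigma|$. The sequence $\sigma$ is indecomposable if it embeds into each of its proper tails. $i^F_{\omega^\omega}(Q)$ is the set of indecomposable finite-range sequences over $Q$ of length $<\omega^\omega$, ordered by $\preceq$. *)

theory Defs
  imports "HOL-Library.FSet" "HOL-Library.Multiset_Order" "HOL-Library.FuncSet"
begin

datatype 'q tree = Leaf 'q | Node "'q tree fset"

inductive tree_in :: "'q set \<Rightarrow> 'q tree \<Rightarrow> bool" for Q where
  leaf_in: "q \<in> Q \<Longrightarrow> tree_in Q (Leaf q)"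
| node_in: "ts \<noteq> {||} \<Longrightarrow> (\<forall>t. t |\<in>| ts \<longrightarrow> tree_in Q t) \<Longrightarrow> tree_in Q (Node ts)"

definition Tf :: "'q set \<Rightarrow> 'q tree set" where
  "Tf Q = {t. tree_in Q t}"

inductive tree_le :: "('q \<Rightarrow> 'q \<Rightarrow> bool) \<Rightarrow> 'q tree \<Rightarrow> 'q tree \<Rightarrow> bool" for le where
  leaf_leaf: "le x y \<Longrightarrow> tree_le le (Leaf x) (Leaf y)"
| leaf_node: "t |\<in>| ts \<Longrightarrow> tree_le le (Leaf x) t \<Longrightarrow> tree_le le (Leaf x) (Node ts)"
| node_node: "(\<forall>s. s |\<in>| ss \<longrightarrow> (\<exists>t. t |\<in>| ts \<and> tree_le le s t))
              \<Longrightarrow> tree_le le (Node ss) (Node ts)"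

text \<open>Ordinals below omega^omega are represented by finite multisets of naturals
under the multiset order: the multiset {k1,...,kn} stands for the Cantor normal
form omega^k1 + ... + omega^kn (k1 >= ... >= kn), and the multiset order coincides
with the ordinal order. The empty multiset is the ordinal 0; the ordinal alpha is
the set of ordinals {..<alpha}.

A sequence is a pair (alpha, s) with s an extensional function on {..<alpha}.\<close>

type_synonym 'q tseq = "nat multiset \<times> (nat multiset \<Rightarrow> 'q)"

definition seq_len :: "'q tseq \<Rightarrow> nat multiset" where
  "seq_len s = fst s"

definition seq_fun :: "'q tseq \<Rightarrow> nat multiset \<Rightarrow> 'q" where
  "seq_fun s = snd s"

definition seq_le :: "('q \<Rightarrow> 'q \<Rightarrow> bool) \<Rightarrow> 'q tseq \<Rightarrow> 'q tseq \<Rightarrow> bool" where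
  "seq_le le s t \<longleftrightarrow>
     (\<exists>f. strict_mono_on {..<seq_len s} f \<and> f ` {..<seq_len s} \<subseteq> {..<seq_len t} \<and>
          (\<forall>i \<in> {..<seq_len s}. le (seq_fun s i) (seq_fun t (f i))))"

text \<open>Indecomposable: sigma embeds into each proper tail i |-> sigma(delta + i),
0 < delta < |sigma|. Since i |-> delta + i is an order isomorphism from the length
of the tail onto the interval [delta, |sigma|), this is expressed as an embedding
of sigma into sigma restricted to {delta..<|sigma|}.\<close>
definition indecomposable :: "('q \<Rightarrow> 'q \<Rightarrow> bool) \<Rightarrow> 'q tseq \<Rightarrow> bool" where
  "indecomposable le s \<longleftrightarrow>
     (\<forall>d. {#} < d \<and> d < seq_len s \<longrightarrow>
        (\<exists>f. strict_mono_on {..<seq_len s} f \<and> f ` {..<seq_len s} \<subseteq> {d..<seq_len s} \<and>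
             (\<forall>i \<in> {..<seq_len s}. le (seq_fun s i) (seq_fun s (f i)))))"

definition iF :: "'q set \<Rightarrow> ('q \<Rightarrow> 'q \<Rightarrow> bool) \<Rightarrow> 'q tseq set" where
  "iF Q le = {s. seq_len s \<noteq> {#} \<and> seq_fun s \<in> {..<seq_len s} \<rightarrow>\<^sub>E Q \<and>
                 finite (seq_fun s ` {..<seq_len s}) \<and> indecomposable le s}"

end

theory Submission
  imports Defs
begin

definition P :: "nat \<Rightarrow> nat multiset set" where "P h = {x. \<forall>y\<in>#x. y < h}"

lemma P_lessThan: "{..<{#h#}} = P h"
  by (auto simp: P_def)

lemma rep_add: "replicate_mset (a + b) k = replicate_mset a k + replicate_mset b k"
  by (rule multiset_eqI) simp

definition sh :: "nat \<Rightarrow> nat \<Rightarrow> nat multiset \<Rightarrow> nat multiset" where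
  "sh n k r = replicate_mset n k + r"

lemma rep_lt_aux:
  assumes ab: "(a::nat) < b" and A: "A \<in> P k"
  shows "replicate_mset a k + A < replicate_mset b k + B"
proof -
  have A': "A < {#k#}" using A by (auto simp: P_def)
  obtain c where c: "b = a + Suc c" using ab by (auto dest!: less_imp_Suc_add)
  have 1: "{#k#} \<le> {#k#} + (replicate_mset c k + B)" by simp
  have 2: "{#k#} + (replicate_mset c k + B) = replicate_mset (Suc c) k + B" by simp
  have 3: "A < replicate_mset (Suc c) k + B" using A' 1 2 by (metis order_less_le_trans)
  have 4: "replicate_mset a k + A < replicate_mset a k + (replicate_mset (Suc c) k + B)"
    using 3 by simp
  have 5: "replicate_mset a k + (replicate_mset (Suc c) k + B) = replicate_mset b k + B"
    unfolding c rep_add by (simp add: add.assoc)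
  show ?thesis by (metis 4 5)
qed

lemma rep_less:
  assumes "A \<in> P k" "B \<in> P k"
  shows "(replicate_mset a k + A < replicate_mset b k + B) \<longleftrightarrow> (a < b \<or> a = b \<and> A < B)"
proof (cases a b rule: linorder_cases)
  case less then show ?thesis using rep_lt_aux assms by auto
next
  case equal then show ?thesis by simp
next
  case greater
  then have "replicate_mset b k + B < replicate_mset a k + A" using rep_lt_aux assms by auto
  then show ?thesis using greater by auto
qed

lemma rep_le:
  assumes "A \<in> P k" "B \<in> P k"
  shows "(replicate_mset a k + A \<le> replicate_mset b k + B) \<longleftrightarrow> (a < b \<or> a = b \<and> A \<le> B)"
  using rep_less[OF assms(2,1), of b a] by (auto simp: not_less[symmetric])

lemma P_Suc_decomp:
  assumes "x \<in> P (Suc k)"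
  shows "x = replicate_mset (count x k) k + filter_mset (\<lambda>y. y < k) x"
    and "filter_mset (\<lambda>y. y < k) x \<in> P k"
proof -
  show "filter_mset (\<lambda>y. y < k) x \<in> P k" by (auto simp: P_def)
  show "x = replicate_mset (count x k) k + filter_mset (\<lambda>y. y < k) x"
  proof (rule multiset_eqI)
    fix y
    show "count x y = count (replicate_mset (count x k) k + filter_mset (\<lambda>y. y < k) x) y"
      using assms by (cases "y < k") (auto simp: P_def not_less_eq_eq count_eq_zero_iff)
  qed
qed

lemma count_sh: "r \<in> P k \<Longrightarrow> count (sh n k r) k = n"
  by (auto simp: sh_def P_def count_eq_zero_iff)

lemma filter_sh: "r \<in> P k \<Longrightarrow> filter_mset (\<lambda>y. y < k) (sh n k r) = r"
proof (rule multiset_eqI)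
  fix y assume "r \<in> P k"
  then show "count (filter_mset (\<lambda>y. y < k) (sh n k r)) y = count r y"
    by (cases "y < k") (auto simp: sh_def P_def count_eq_zero_iff)
qed

lemma sh_P: "r \<in> P k \<Longrightarrow> sh n k r \<in> P (Suc k)"
  by (auto simp: sh_def P_def)

lemma sh_less_iff: "sh n k r < sh n k r' \<longleftrightarrow> r < r'"
  by (simp add: sh_def)

lemma P_Suc_eq: "P (Suc k) = (\<Union>n. sh n k ` P k)"
proof
  show "P (Suc k) \<subseteq> (\<Union>n. sh n k ` P k)"
  proof
    fix x assume x: "x \<in> P (Suc k)"
    then have "x = sh (count x k) k (filter_mset (\<lambda>y. y < k) x)"
      using P_Suc_decomp(1) sh_def by metis
    then show "x \<in> (\<Union>n. sh n k ` P k)" using P_Suc_decomp(2)[OF x] by blast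
  qed
qed (auto intro: sh_P)

lemma P_mono: "h \<le> k \<Longrightarrow> P h \<subseteq> P k"
  by (auto simp: P_def)

lemma empty_P[simp]: "{#} \<in> P k" by (simp add: P_def)

lemma P_0: "P 0 = {{#}}" by (auto simp: P_def)


definition emb :: "('q \<Rightarrow> 'q \<Rightarrow> bool) \<Rightarrow> (nat multiset \<Rightarrow> 'q) \<Rightarrow> nat multiset set
    \<Rightarrow> (nat multiset \<Rightarrow> 'q) \<Rightarrow> nat multiset set \<Rightarrow> bool" where
  "emb le \<sigma> D \<tau> S \<longleftrightarrow> (\<exists>e. strict_mono_on D e \<and> e ` D \<subseteq> S \<and> (\<forall>i\<in>D. le (\<sigma> i) (\<tau> (e i))))"

lemma emb_mono: "emb le \<sigma> D \<tau> S \<Longrightarrow> D' \<subseteq> D \<Longrightarrow> S \<subseteq> S' \<Longrightarrow> emb le \<sigma> D' \<tau> S'"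
  unfolding emb_def strict_mono_on_def by (metis (no_types, lifting) image_mono order_trans subsetD)

lemma emb_map: "strict_mono_on D \<phi> \<Longrightarrow> \<phi> ` D \<subseteq> S \<Longrightarrow> (\<forall>x\<in>D. le (\<sigma> x) (\<tau> (\<phi> x))) \<Longrightarrow> emb le \<sigma> D \<tau> S"
  unfolding emb_def by blast

lemma emb_empty[simp]: "emb le \<sigma> {} \<tau> S"
  unfolding emb_def by (auto simp: strict_mono_on_def)

lemma strict_mono_on_less_iff:
  fixes \<phi> :: "'a::linorder \<Rightarrow> 'b::linorder"
  assumes "strict_mono_on D \<phi>" "x \<in> D" "y \<in> D"
  shows "\<phi> x < \<phi> y \<longleftrightarrow> x < y"
  using assms unfolding strict_mono_on_def by (metis linorder_neqE order_less_asym order_less_irrefl)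

lemma strict_mono_on_le_iff:
  fixes \<phi> :: "'a::linorder \<Rightarrow> 'b::linorder"
  assumes "strict_mono_on D \<phi>" "x \<in> D" "y \<in> D"
  shows "\<phi> x \<le> \<phi> y \<longleftrightarrow> x \<le> y"
  using strict_mono_on_less_iff[OF assms(1,3,2)] by (simp add: not_less[symmetric])

lemma emb_inv:
  fixes \<phi> :: "nat multiset \<Rightarrow> nat multiset"
  assumes sm: "strict_mono_on D \<phi>" and DS: "D \<subseteq> S" and le: "\<forall>x\<in>D. le (\<sigma> (\<phi> x)) (\<tau> x)"
  shows "emb le \<sigma> (\<phi> ` D) \<tau> S"
proof -
  have inj: "inj_on \<phi> D" using sm strict_mono_on_imp_inj_on by blast
  let ?e = "inv_into D \<phi>"
  show ?thesis unfolding emb_def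
  proof (intro exI[of _ ?e] conjI)
    show "strict_mono_on (\<phi> ` D) ?e"
    proof (rule strict_mono_onI)
      fix a b assume "a \<in> \<phi> ` D" "b \<in> \<phi> ` D" "a < b"
      then obtain x y where "x \<in> D" "y \<in> D" "a = \<phi> x" "b = \<phi> y" "\<phi> x < \<phi> y" by auto
      then show "?e a < ?e b" using inj strict_mono_on_less_iff[OF sm] by auto
    qed
    show "?e ` \<phi> ` D \<subseteq> S" using inj DS by auto
    show "\<forall>i\<in>\<phi> ` D. le (\<sigma> i) (\<tau> (?e i))" using inj le by auto
  qed
qed

lemma emb_Union:
  fixes D S :: "nat \<Rightarrow> nat multiset set"
  assumes Dord: "\<And>i j x y. i < j \<Longrightarrow> x \<in> D i \<Longrightarrow> y \<in> D j \<Longrightarrow> x < y"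
    and Sord: "\<And>i j x y. i < j \<Longrightarrow> x \<in> S i \<Longrightarrow> y \<in> S j \<Longrightarrow> x < y"
    and em: "\<And>i. emb le \<sigma> (D i) \<tau> (S i)"
  shows "emb le \<sigma> (\<Union>i. D i) \<tau> (\<Union>i. S i)"
proof -
  have "\<forall>i. \<exists>e. strict_mono_on (D i) e \<and> e ` D i \<subseteq> S i \<and> (\<forall>x\<in>D i. le (\<sigma> x) (\<tau> (e x)))"
    using em unfolding emb_def by blast
  then obtain e where e: "\<And>i. strict_mono_on (D i) (e i)" "\<And>i. e i ` D i \<subseteq> S i"
     "\<And>i x. x \<in> D i \<Longrightarrow> le (\<sigma> x) (\<tau> (e i x))"
    by metis
  have uniq: "i = j" if "x \<in> D i" "x \<in> D j" for x i j
    using Dord[of i j x x] Dord[of j i x x] that by (metis less_irrefl linorder_neqE_nat)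
  define idx where "idx x = (SOME i. x \<in> D i)" for x
  have idx: "idx x = i" if "x \<in> D i" for x i
    unfolding idx_def by (rule someI2[of _ i]) (use that uniq in auto)
  define E where "E x = e (idx x) x" for x
  show ?thesis unfolding emb_def
  proof (intro exI[of _ E] conjI)
    show "strict_mono_on (\<Union>i. D i) E"
    proof (rule strict_mono_onI)
      fix x y assume "x \<in> (\<Union>i. D i)" "y \<in> (\<Union>i. D i)" "x < y"
      then obtain i j where ij: "x \<in> D i" "y \<in> D j" "x < y" by auto
      show "E x < E y"
      proof (cases i j rule: linorder_cases)
        case less
        have "e i x \<in> S i" "e j y \<in> S j" using e(2) ij by auto
        then show ?thesis using Sord[OF less] unfolding E_def using ij by (simp add: idx)
      next
        case equal
        then show ?thesis using e(1)[of i] ij unfolding E_def strict_mono_on_def by (auto simp: idx)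
      next
        case greater
        then show ?thesis using Dord[OF greater ij(2,1)] ij(3) by auto
      qed
    qed
    show "E ` (\<Union>i. D i) \<subseteq> (\<Union>i. S i)" using e(2) by (fastforce simp: E_def idx)
    show "\<forall>x\<in>(\<Union>i. D i). le (\<sigma> x) (\<tau> (E x))" using e(3) by (auto simp: E_def idx)
  qed
qed

lemma emb_Un:
  assumes "\<And>x y. x \<in> D1 \<Longrightarrow> y \<in> D2 \<Longrightarrow> x < y" "\<And>x y. x \<in> S1 \<Longrightarrow> y \<in> S2 \<Longrightarrow> x < y"
    "emb le \<sigma> D1 \<tau> S1" "emb le \<sigma> D2 \<tau> S2"
  shows "emb le \<sigma> (D1 \<union> D2) \<tau> (S1 \<union> S2)"
proof -
  define D where "D i = (if i = 0 then D1 else if i = 1 then D2 else {})" for i :: nat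
  define S where "S i = (if i = 0 then S1 else if i = 1 then S2 else {})" for i :: nat
  have "emb le \<sigma> (\<Union>i. D i) \<tau> (\<Union>i. S i)"
    by (rule emb_Union) (use assms in \<open>auto simp: D_def S_def split: if_splits\<close>)
  moreover have "(\<Union>i. D i) = D1 \<union> D2" "(\<Union>i. S i) = S1 \<union> S2"
    by (auto simp: D_def S_def split: if_splits)
  ultimately show ?thesis by simp
qed

locale qo =
  fixes Q :: "'q set" and le :: "'q \<Rightarrow> 'q \<Rightarrow> bool"
  assumes le_trans: "le x y \<Longrightarrow> le y z \<Longrightarrow> le x z"
    and le_refl: "x \<in> Q \<Longrightarrow> le x x"
    and le_Q: "le x y \<Longrightarrow> x \<in> Q \<and> y \<in> Q"
begin

lemma emb_trans: "emb le \<sigma> D \<tau> S \<Longrightarrow> emb le \<tau> S \<upsilon> U \<Longrightarrow> emb le \<sigma> D \<upsilon> U"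
  unfolding emb_def
proof (elim exE conjE)
  fix e1 e2 assume a: "strict_mono_on D e1" "e1 ` D \<subseteq> S" "\<forall>i\<in>D. le (\<sigma> i) (\<tau> (e1 i))"
    "strict_mono_on S e2" "e2 ` S \<subseteq> U" "\<forall>i\<in>S. le (\<tau> i) (\<upsilon> (e2 i))"
  show "\<exists>e. strict_mono_on D e \<and> e ` D \<subseteq> U \<and> (\<forall>i\<in>D. le (\<sigma> i) (\<upsilon> (e i)))"
  proof (intro exI[of _ "e2 \<circ> e1"] conjI)
    show "strict_mono_on D (e2 \<circ> e1)" using a(1,2,4) unfolding strict_mono_on_def by (simp add: image_subset_iff)
    show "(e2 \<circ> e1) ` D \<subseteq> U" using a(2,5) by auto
    show "\<forall>i\<in>D. le (\<sigma> i) (\<upsilon> ((e2 \<circ> e1) i))" using a(2,3,6) le_trans by fastforce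
  qed
qed

lemma emb_refl: "\<sigma> ` D \<subseteq> Q \<Longrightarrow> D \<subseteq> S \<Longrightarrow> emb le \<sigma> D \<sigma> S"
  by (rule emb_map[of D id]) (auto simp: strict_mono_on_def le_refl)

end


type_synonym 'q sq = "nat \<times> (nat multiset \<Rightarrow> 'q)"

definition nH :: "'q sq list \<Rightarrow> nat" where "nH xs = Max (fst ` set xs)"
definition nj0 :: "'q sq list \<Rightarrow> nat" where "nj0 xs = (SOME i. i < length xs \<and> fst (xs!i) = nH xs)"
definition nfun :: "'q sq list \<Rightarrow> nat multiset \<Rightarrow> 'q" where
  "nfun xs x = (let j = count x (nH xs) mod length xs; r = filter_mset (\<lambda>y. y < nH xs) x in
      if r \<in> P (fst (xs!j)) then snd (xs!j) r else snd (xs ! nj0 xs) r)"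

definition nseq :: "'q sq list \<Rightarrow> 'q sq" where "nseq xs = (Suc (nH xs), nfun xs)"

primrec F :: "'q tree \<Rightarrow> 'q sq" where
  "F (Leaf q) = (0, \<lambda>_. q)"
| "F (Node ts) = nseq (SOME xs. set xs = fset (fimage F ts))"

definition enum :: "'q tree fset \<Rightarrow> 'q sq list" where "enum ts = (SOME xs. set xs = fset (fimage F ts))"

lemma F_Node: "F (Node ts) = nseq (enum ts)" by (simp add: enum_def)

lemma set_enum: "set (enum ts) = F ` fset ts"
proof -
  have "\<exists>xs. set xs = F ` fset ts" by (rule finite_list) simp
  then show ?thesis unfolding enum_def fimage.rep_eq by (rule someI_ex)
qed

lemma enum_nonempty: "ts \<noteq> {||} \<Longrightarrow> enum ts \<noteq> []"
  using set_enum[of ts] by auto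

context
  fixes xs :: "'q sq list"
  assumes ne: "xs \<noteq> []"
begin

lemma nH_ge: "i < length xs \<Longrightarrow> fst (xs!i) \<le> nH xs"
  unfolding nH_def by (rule Max_ge) auto

lemma nj0: "nj0 xs < length xs" "fst (xs ! nj0 xs) = nH xs"
proof -
  have "nH xs \<in> fst ` set xs" unfolding nH_def using ne by (intro Max_in) auto
  then have "\<exists>i. i < length xs \<and> fst (xs!i) = nH xs" by (force simp: in_set_conv_nth)
  then have "nj0 xs < length xs \<and> fst (xs ! nj0 xs) = nH xs" unfolding nj0_def by (rule someI_ex)
  then show "nj0 xs < length xs" "fst (xs ! nj0 xs) = nH xs" by auto
qed

lemma len_pos: "0 < length xs" using ne by simp

lemma nfun_part1:
  assumes "r \<in> P (fst (xs ! (n mod length xs)))"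
  shows "nfun xs (sh n (nH xs) r) = snd (xs ! (n mod length xs)) r"
proof -
  have r: "r \<in> P (nH xs)" using assms P_mono[OF nH_ge[of "n mod length xs"]] len_pos by auto
  show ?thesis using assms by (simp add: nfun_def count_sh[OF r] filter_sh[OF r])
qed

lemma nfun_part2:
  assumes "r \<in> P (nH xs)" "r \<notin> P (fst (xs ! (n mod length xs)))"
  shows "nfun xs (sh n (nH xs) r) = snd (xs ! nj0 xs) r"
  using assms by (simp add: nfun_def count_sh filter_sh)

end

definition Part1 :: "'q sq list \<Rightarrow> nat \<Rightarrow> nat multiset set" where
  "Part1 xs n = sh n (nH xs) ` P (fst (xs ! (n mod length xs)))"
definition Part2 :: "'q sq list \<Rightarrow> nat \<Rightarrow> nat multiset set" where
  "Part2 xs n = sh n (nH xs) ` (P (nH xs) - P (fst (xs ! (n mod length xs))))"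
definition Blk :: "nat \<Rightarrow> nat \<Rightarrow> nat multiset set" where
  "Blk k n = sh n k ` P k"

lemma Blk_less: "n < n' \<Longrightarrow> x \<in> Blk k n \<Longrightarrow> y \<in> Blk k n' \<Longrightarrow> x < y"
  by (auto simp: Blk_def sh_def rep_less)

lemma Blk_le_less: "n < n' \<Longrightarrow> x \<in> sh n k ` P k \<Longrightarrow> y \<in> sh n' k ` P k \<Longrightarrow> x < y"
  using Blk_less unfolding Blk_def by blast

lemma P_Suc_Blk: "P (Suc k) = (\<Union>n. Blk k n)"
  using P_Suc_eq unfolding Blk_def by blast

lemma Blk_P: "Blk k n \<subseteq> P (Suc k)"
  using P_Suc_Blk by blast

lemma sh_strict_mono: "strict_mono_on D (sh n k)"
  by (auto simp: strict_mono_on_def sh_less_iff)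

lemma notP_ge: "r \<notin> P h \<Longrightarrow> r' \<in> P h \<Longrightarrow> r' < r"
  using P_lessThan[of h] by (metis lessThan_iff not_less order_less_le_trans)

context
  fixes xs :: "'q sq list"
  assumes ne: "xs \<noteq> []"
begin

lemma Part_sub: "Part1 xs n \<subseteq> Blk (nH xs) n" "Part2 xs n \<subseteq> Blk (nH xs) n"
  unfolding Part1_def Part2_def Blk_def
  using P_mono[OF nH_ge[OF ne, of "n mod length xs"]] len_pos[OF ne] by auto

lemma Blk_Part: "Blk (nH xs) n = Part1 xs n \<union> Part2 xs n"
  unfolding Part1_def Part2_def Blk_def
  using P_mono[OF nH_ge[OF ne, of "n mod length xs"]] len_pos[OF ne] by auto

lemma Part12_less: "x \<in> Part1 xs n \<Longrightarrow> y \<in> Part2 xs n \<Longrightarrow> x < y"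
  unfolding Part1_def Part2_def using notP_ge by (auto simp: sh_less_iff)

lemma P_Suc_nH: "P (Suc (nH xs)) = (\<Union>n. Part1 xs n \<union> Part2 xs n)"
  using P_Suc_Blk Blk_Part by auto

end


definition vq :: "'q set \<Rightarrow> 'q sq \<Rightarrow> bool" where "vq Q s \<longleftrightarrow> snd s ` P (fst s) \<subseteq> Q"

context qo begin

abbreviation sle :: "'q sq \<Rightarrow> 'q sq \<Rightarrow> bool" where
  "sle a b \<equiv> emb le (snd a) (P (fst a)) (snd b) (P (fst b))"

lemma sle_trans: "sle a b \<Longrightarrow> sle b c \<Longrightarrow> sle a c" by (rule emb_trans)

context
  fixes xs :: "'q sq list"
  assumes ne: "xs \<noteq> []" and vqs: "\<forall>s\<in>set xs. vq Q s"
begin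

lemma vq_nth: "i < length xs \<Longrightarrow> snd (xs!i) ` P (fst (xs!i)) \<subseteq> Q"
  using vqs by (auto simp: vq_def)

lemma nfun_Q: "nfun xs ` P (Suc (nH xs)) \<subseteq> Q"
proof
  fix v assume "v \<in> nfun xs ` P (Suc (nH xs))"
  then obtain x where x: "x \<in> P (Suc (nH xs))" "v = nfun xs x" by auto
  then obtain n where "x \<in> Part1 xs n \<union> Part2 xs n" using P_Suc_nH[OF ne] by auto
  then show "v \<in> Q"
  proof
    assume "x \<in> Part1 xs n"
    then obtain r where r: "r \<in> P (fst (xs ! (n mod length xs)))" "x = sh n (nH xs) r"
      unfolding Part1_def by auto
    then show ?thesis using x nfun_part1[OF ne r(1)] vq_nth[of "n mod length xs"] len_pos[OF ne] by auto
  next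
    assume "x \<in> Part2 xs n"
    then obtain r where r: "r \<in> P (nH xs)" "r \<notin> P (fst (xs ! (n mod length xs)))" "x = sh n (nH xs) r"
      unfolding Part2_def by auto
    then show ?thesis using x nfun_part2[OF ne r(1,2)] vq_nth[of "nj0 xs"] nj0[OF ne] by auto
  qed
qed

lemma vq_nseq: "vq Q (nseq xs)"
  using nfun_Q by (simp add: vq_def nseq_def)

lemma child_to_Part1:
  assumes "n mod length xs = j"
  shows "emb le (snd (xs!j)) (P (fst (xs!j))) (nfun xs) (Part1 xs n)"
proof (rule emb_map[OF sh_strict_mono])
  have j: "j < length xs" using assms len_pos[OF ne] by auto
  show "sh n (nH xs) ` P (fst (xs ! j)) \<subseteq> Part1 xs n" unfolding Part1_def assms ..
  show "\<forall>x\<in>P (fst (xs ! j)). le (snd (xs ! j) x) (nfun xs (sh n (nH xs) x))"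
    using nfun_part1[OF ne, of _ n] assms vq_nth[OF j] le_refl by auto
qed

lemma Part1_to_child:
  "emb le (nfun xs) (Part1 xs n) (snd (xs!(n mod length xs))) (P (fst (xs!(n mod length xs))))"
  unfolding Part1_def
proof (rule emb_inv[OF sh_strict_mono])
  have j: "n mod length xs < length xs" using len_pos[OF ne] by auto
  show "\<forall>x\<in>P (fst (xs ! (n mod length xs))). le (nfun xs (sh n (nH xs) x)) (snd (xs ! (n mod length xs)) x)"
    using nfun_part1[OF ne, of _ n] vq_nth[OF j] le_refl by auto
qed simp

lemma Part2_to_j0:
  "emb le (nfun xs) (Part2 xs n) (snd (xs!nj0 xs)) (P (fst (xs!nj0 xs)))"
  unfolding Part2_def
proof (rule emb_inv[OF sh_strict_mono])
  show "\<forall>x\<in>P (nH xs) - P (fst (xs ! (n mod length xs))). le (nfun xs (sh n (nH xs) x)) (snd (xs ! nj0 xs) x)"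
    using nfun_part2[OF ne, of _ n] vq_nth[OF nj0(1)[OF ne]] le_refl nj0(2)[OF ne] by auto
qed (use nj0(2)[OF ne] in auto)

end

end


context qo begin

lemma Part_ord:
  assumes ne: "xs \<noteq> []"
  defines "D \<equiv> \<lambda>p. if even p then Part1 xs (p div 2) else Part2 xs (p div 2)"
  shows "\<And>p p' x y. p < p' \<Longrightarrow> x \<in> D p \<Longrightarrow> y \<in> D p' \<Longrightarrow> x < y"
    and "(\<Union>p. D p) = P (Suc (nH xs))"
proof -
  fix p p' x y assume pp: "p < p'" and x: "x \<in> D p" and y: "y \<in> D p'"
  have xb: "x \<in> Blk (nH xs) (p div 2)" and yb: "y \<in> Blk (nH xs) (p' div 2)"
    using x y Part_sub[OF ne] unfolding D_def by (auto split: if_splits)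
  show "x < y"
  proof (cases "p div 2 = p' div 2")
    case True
    then have "even p" "odd p'" using pp by presburger+
    then show ?thesis using x y True Part12_less[OF ne] unfolding D_def by auto
  next
    case False
    then have "p div 2 < p' div 2" using pp by (simp add: div_le_mono le_neq_implies_less)
    then show ?thesis using Blk_less xb yb by blast
  qed
next
  show "(\<Union>p. D p) = P (Suc (nH xs))"
  proof
    show "(\<Union>p. D p) \<subseteq> P (Suc (nH xs))" unfolding D_def P_Suc_nH[OF ne] by (auto split: if_splits)
    show "P (Suc (nH xs)) \<subseteq> (\<Union>p. D p)"
    proof
      fix x assume "x \<in> P (Suc (nH xs))"
      then obtain n where "x \<in> Part1 xs n \<or> x \<in> Part2 xs n" unfolding P_Suc_nH[OF ne] by auto
      then show "x \<in> (\<Union>p. D p)"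
      proof
        assume "x \<in> Part1 xs n" then have "x \<in> D (2*n)" unfolding D_def by simp
        then show ?thesis by blast
      next
        assume "x \<in> Part2 xs n" then have "x \<in> D (2*n+1)" unfolding D_def by simp
        then show ?thesis by blast
      qed
    qed
  qed
qed

lemma Part1_sub_P: "ys \<noteq> [] \<Longrightarrow> Part1 ys n \<subseteq> P (Suc (nH ys))"
  using Part_sub Blk_P by blast

lemma node_le:
  assumes nx: "xs \<noteq> []" and ny: "ys \<noteq> []" and vx: "\<forall>s\<in>set xs. vq Q s" and vy: "\<forall>s\<in>set ys. vq Q s"
    and le: "\<forall>i<length xs. \<exists>j<length ys. sle (xs!i) (ys!j)"
  shows "sle (nseq xs) (nseq ys)"
proof -
  obtain \<phi> where \<phi>: "\<And>i. i < length xs \<Longrightarrow> \<phi> i < length ys \<and> sle (xs!i) (ys!(\<phi> i))"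
    using le by metis
  define m where "m = length ys"
  have m: "0 < m" using ny m_def by simp
  define c where "c p = (if even p then (p div 2) mod length xs else nj0 xs)" for p
  have c: "c p < length xs" for p using nj0(1)[OF nx] len_pos[OF nx] by (simp add: c_def)
  define D where "D = (\<lambda>p. if even p then Part1 xs (p div 2) else Part2 xs (p div 2))"
  define S where "S p = Part1 ys (m*p + \<phi> (c p))" for p
  have em: "emb le (nfun xs) (D p) (nfun ys) (S p)" for p
  proof -
    have mod: "(m*p + \<phi> (c p)) mod length ys = \<phi> (c p)" using \<phi>[OF c[of p]] m_def by simp
    have 2: "emb le (snd (ys ! \<phi> (c p))) (P (fst (ys ! \<phi> (c p)))) (nfun ys) (S p)"
      unfolding S_def using child_to_Part1[OF ny vy mod] .
    have 1: "emb le (nfun xs) (D p) (snd (xs ! c p)) (P (fst (xs ! c p)))"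
    proof (cases "even p")
      case True then show ?thesis using Part1_to_child[OF nx vx, of "p div 2"] unfolding D_def c_def by simp
    next
      case False then show ?thesis using Part2_to_j0[OF nx vx, of "p div 2"] unfolding D_def c_def by simp
    qed
    show ?thesis using emb_trans[OF 1 emb_trans[OF conjunct2[OF \<phi>[OF c[of p]]] 2]] .
  qed
  have Sord: "x < y" if "p < p'" "x \<in> S p" "y \<in> S p'" for p p' x y
  proof -
    have "m*p + \<phi> (c p) < m*p' + \<phi> (c p')"
    proof -
      have "m*p + \<phi> (c p) < m*p + m" using \<phi>[OF c[of p]] m_def by simp
      also have "\<dots> = m * Suc p" by simp
      also have "\<dots> \<le> m * p'" using that(1) by (intro mult_le_mono2) simp
      finally show ?thesis by simp
    qed
    then show ?thesis using Blk_less that(2,3) Part_sub[OF ny] unfolding S_def by blast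
  qed
  have "emb le (nfun xs) (\<Union>p. D p) (nfun ys) (\<Union>p. S p)"
    by (rule emb_Union[OF Part_ord(1)[OF nx] Sord em]) (auto simp: D_def)
  moreover have "(\<Union>p. D p) = P (Suc (nH xs))" using Part_ord(2)[OF nx] unfolding D_def by simp
  moreover have "(\<Union>p. S p) \<subseteq> P (Suc (nH ys))" unfolding S_def using Part1_sub_P[OF ny] by blast
  ultimately show ?thesis unfolding nseq_def using emb_mono by fastforce
qed

end


definition covers :: "('q \<Rightarrow> 'q \<Rightarrow> bool) \<Rightarrow> (nat multiset \<Rightarrow> 'q) \<Rightarrow> nat multiset set \<Rightarrow> 'q sq list \<Rightarrow> bool" where
  "covers le \<rho> D L \<longleftrightarrow> (\<forall>\<tau> S. (\<forall>i j x y. i < j \<longrightarrow> j < length L \<longrightarrow> x \<in> S i \<longrightarrow> y \<in> S j \<longrightarrow> x < y) \<longrightarrow>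
      (\<forall>i<length L. emb le (snd (L!i)) (P (fst (L!i))) \<tau> (S i)) \<longrightarrow> emb le \<rho> D \<tau> (\<Union>i<length L. S i))"

context qo begin

lemma emb_node_into:
  assumes nx: "xs \<noteq> []" and vx: "\<forall>s\<in>set xs. vq Q s"
    and io: "\<forall>i<length xs. \<forall>N. \<exists>n\<ge>N. emb le (snd (xs!i)) (P (fst (xs!i))) \<rho> (Blk k n)"
  shows "emb le (nfun xs) (P (Suc (nH xs))) \<rho> (P (Suc k))"
proof -
  define c where "c p = (if even p then (p div 2) mod length xs else nj0 xs)" for p
  have c: "c p < length xs" for p using nj0(1)[OF nx] len_pos[OF nx] by (simp add: c_def)
  define D where "D = (\<lambda>p. if even p then Part1 xs (p div 2) else Part2 xs (p div 2))"
  define good where "good p n \<longleftrightarrow> emb le (snd (xs ! c p)) (P (fst (xs ! c p))) \<rho> (Blk k n)" for p n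
  have ex: "\<exists>n\<ge>N. good p n" for p N using io c[of p] unfolding good_def by blast
  define nb where "nb = rec_nat (SOME n. good 0 n) (\<lambda>p prev. SOME n. n \<ge> Suc prev \<and> good (Suc p) n)"
  have nb0: "nb 0 = (SOME n. good 0 n)" and nbS: "nb (Suc p) = (SOME n. n \<ge> Suc (nb p) \<and> good (Suc p) n)" for p
    unfolding nb_def by simp_all
  have g: "good p (nb p) \<and> (nb p < nb (Suc p))" for p
  proof -
    have a: "good (Suc p) (nb (Suc p)) \<and> nb (Suc p) \<ge> Suc (nb p)" for p
      unfolding nbS using someI_ex[OF ex[of "Suc (nb p)" "Suc p"]] by auto
    have b: "good 0 (nb 0)" unfolding nb0 using someI_ex[OF ex[of 0 0]] by auto
    have "good p (nb p)" using a b by (cases p) auto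
    then show ?thesis using a[of p] by auto
  qed
  have smono: "strict_mono nb" unfolding strict_mono_Suc_iff using g by blast
  have em: "emb le (nfun xs) (D p) \<rho> (Blk k (nb p))" for p
  proof -
    have 1: "emb le (nfun xs) (D p) (snd (xs ! c p)) (P (fst (xs ! c p)))"
    proof (cases "even p")
      case True then show ?thesis using Part1_to_child[OF nx vx, of "p div 2"] unfolding D_def c_def by simp
    next
      case False then show ?thesis using Part2_to_j0[OF nx vx, of "p div 2"] unfolding D_def c_def by simp
    qed
    show ?thesis using emb_trans[OF 1] g[of p] unfolding good_def by blast
  qed
  have Sord: "x < y" if "p < p'" "x \<in> Blk k (nb p)" "y \<in> Blk k (nb p')" for p p' x y
    using Blk_less[OF _ that(2,3)] smono that(1) by (simp add: strict_mono_less)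
  have "emb le (nfun xs) (\<Union>p. D p) \<rho> (\<Union>p. Blk k (nb p))"
    by (rule emb_Union[OF Part_ord(1)[OF nx] Sord em]) (auto simp: D_def)
  moreover have "(\<Union>p. D p) = P (Suc (nH xs))" using Part_ord(2)[OF nx] unfolding D_def by simp
  moreover have "(\<Union>p. Blk k (nb p)) \<subseteq> P (Suc k)" using Blk_P by blast
  ultimately show ?thesis using emb_mono by fastforce
qed

lemma cover_node:
  assumes nx: "xs \<noteq> []" and vx: "\<forall>s\<in>set xs. vq Q s"
    and cov: "\<forall>n\<ge>N0. set (Ls n) \<subseteq> set xs \<and> covers le \<rho> (Blk k n) (Ls n)"
  shows "emb le \<rho> (\<Union>n\<in>{N0..}. Blk k n) (nfun xs) (P (Suc (nH xs)))"
proof -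
  define m where "m = length xs"
  have m: "0 < m" using nx m_def by simp
  define idx where "idx a = (SOME j. j < m \<and> xs!j = a)" for a
  have idx: "idx a < m \<and> xs ! idx a = a" if "a \<in> set xs" for a
    unfolding idx_def by (rule someI_ex) (use that in \<open>auto simp: m_def in_set_conv_nth\<close>)
  define off where "off n = (\<Sum>n'<n. length (Ls n'))" for n
  have offS: "off (Suc n) = off n + length (Ls n)" for n by (simp add: off_def)
  have offmono: "n \<le> n' \<Longrightarrow> off n \<le> off n'" for n n'
    unfolding off_def by (rule sum_mono2) auto
  define Sn where "Sn n i = Part1 xs (m*(off n + i) + idx (Ls n ! i))" for n i
  define bl where "bl n i = m*(off n + i) + idx (Ls n ! i)" for n i
  have bl: "m*(off n + i) \<le> bl n i \<and> bl n i < m*(off n + i + 1)" if "n \<ge> N0" "i < length (Ls n)" for n i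
  proof -
    have "Ls n ! i \<in> set xs" using cov that nth_mem by blast
    then show ?thesis using idx unfolding bl_def by auto
  qed
  have Sn_blk: "Sn n i \<subseteq> Blk (nH xs) (bl n i)" for n i
    unfolding Sn_def bl_def using Part_sub[OF nx] by blast
  define D where "D n = (if n \<ge> N0 then Blk k n else {})" for n
  define T where "T n = (if n \<ge> N0 then (\<Union>i<length (Ls n). Sn n i) else {})" for n
  have em: "emb le \<rho> (D n) (nfun xs) (T n)" for n
  proof (cases "n \<ge> N0")
    case False then show ?thesis by (simp add: D_def T_def)
  next
    case True
    have c: "covers le \<rho> (Blk k n) (Ls n)" using cov True by auto
    have ord: "\<forall>i j x y. i < j \<longrightarrow> j < length (Ls n) \<longrightarrow> x \<in> Sn n i \<longrightarrow> y \<in> Sn n j \<longrightarrow> x < y"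
    proof (intro allI impI)
      fix i j x y assume a: "i < j" "j < length (Ls n)" "x \<in> Sn n i" "y \<in> Sn n j"
      have "bl n i < m*(off n + i + 1)" using bl[OF True] a by auto
      also have "\<dots> \<le> m*(off n + j)" using a(1) by (intro mult_le_mono2) simp
      also have "\<dots> \<le> bl n j" using bl[OF True a(2)] by auto
      finally show "x < y" using Blk_less Sn_blk a(3,4) by blast
    qed
    have ems: "\<forall>i<length (Ls n). emb le (snd (Ls n ! i)) (P (fst (Ls n ! i))) (nfun xs) (Sn n i)"
    proof (intro allI impI)
      fix i assume i: "i < length (Ls n)"
      have a: "Ls n ! i \<in> set xs" using cov True i nth_mem by blast
      have mod: "(m*(off n + i) + idx (Ls n ! i)) mod length xs = idx (Ls n ! i)"
        using idx[OF a] m_def by simp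
      show "emb le (snd (Ls n ! i)) (P (fst (Ls n ! i))) (nfun xs) (Sn n i)"
        using child_to_Part1[OF nx vx mod] idx[OF a] unfolding Sn_def by simp
    qed
    show ?thesis using c ord ems unfolding covers_def D_def T_def using True by auto
  qed
  have Dord: "x < y" if "n < n'" "x \<in> D n" "y \<in> D n'" for n n' x y
    using that Blk_less unfolding D_def by (auto split: if_splits)
  have Tord: "x < y" if tt: "n < n'" "x \<in> T n" "y \<in> T n'" for n n' x y
  proof -
    obtain i where i: "n \<ge> N0" "i < length (Ls n)" "x \<in> Sn n i" using tt(2) unfolding T_def by (auto split: if_splits)
    obtain j where j: "n' \<ge> N0" "j < length (Ls n')" "y \<in> Sn n' j" using tt(3) unfolding T_def by (auto split: if_splits)
    have "bl n i < m*(off n + i + 1)" using bl[OF i(1,2)] by auto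
    also have "\<dots> \<le> m * off (Suc n)" using i(2) unfolding offS by (intro mult_le_mono2) simp
    also have "\<dots> \<le> m * off n'" using tt(1) offmono by (intro mult_le_mono2) simp
    also have "\<dots> \<le> bl n' j" using bl[OF j(1,2)] by (meson le_add1 mult_le_mono2 order_trans)
    finally show "x < y" using Blk_less Sn_blk i(3) j(3) by blast
  qed
  have "emb le \<rho> (\<Union>n. D n) (nfun xs) (\<Union>n. T n)"
    by (rule emb_Union[OF Dord Tord em])
  moreover have "(\<Union>n. D n) = (\<Union>n\<in>{N0..}. Blk k n)" by (auto simp: D_def split: if_splits)
  moreover have "(\<Union>n. T n) \<subseteq> P (Suc (nH xs))" unfolding T_def Sn_def using Part1_sub_P[OF nx]
    by (auto split: if_splits)
  ultimately show ?thesis using emb_mono by fastforce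
qed

end


lemma emb_cong: "(\<And>x. x \<in> D \<Longrightarrow> \<sigma> x = \<sigma>' x) \<Longrightarrow> emb le \<sigma> D \<tau> S = emb le \<sigma>' D \<tau> S"
  unfolding emb_def by auto

lemma emb_cong2: "(\<And>x. x \<in> S \<Longrightarrow> \<tau> x = \<tau>' x) \<Longrightarrow> emb le \<sigma> D \<tau> S = emb le \<sigma> D \<tau>' S"
  unfolding emb_def by (auto simp: image_subset_iff)

lemma ind_iff:
  "indecomposable le ({#h#}, \<sigma>) \<longleftrightarrow> (\<forall>d\<in>P h. d \<noteq> {#} \<longrightarrow> emb le \<sigma> (P h) \<sigma> {x\<in>P h. d \<le> x})"
proof -
  have e2: "{d..<{#h#}} = {x\<in>P h. d \<le> x}" for d by (auto simp: P_def)
  have e3: "({#} < d \<and> d < {#h#}) = (d \<in> P h \<and> d \<noteq> {#})" for d by (auto simp: P_def)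
  show ?thesis unfolding indecomposable_def seq_len_def seq_fun_def emb_def fst_conv snd_conv e2 e3 P_lessThan
    by blast
qed

lemma strict_mono_on_mono_on:
  fixes e :: "'a::linorder \<Rightarrow> 'b::linorder"
  shows "strict_mono_on D e \<Longrightarrow> x \<in> D \<Longrightarrow> y \<in> D \<Longrightarrow> x \<le> y \<Longrightarrow> e x \<le> e y"
  unfolding strict_mono_on_def by (metis order_le_less)

context qo begin

lemma prime:
  assumes ind: "indecomposable le ({#h#}, \<rho>)" and em: "emb le \<rho> (P h) \<tau> (A \<union> B)"
    and AB: "\<And>x y. x \<in> A \<Longrightarrow> y \<in> B \<Longrightarrow> x < y"
  shows "emb le \<rho> (P h) \<tau> A \<or> emb le \<rho> (P h) \<tau> B"
proof -
  obtain e where e: "strict_mono_on (P h) e" "e ` P h \<subseteq> A \<union> B" "\<forall>i\<in>P h. le (\<rho> i) (\<tau> (e i))"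
    using em unfolding emb_def by blast
  show ?thesis
  proof (cases "\<forall>x\<in>P h. e x \<in> A")
    case True
    then have "emb le \<rho> (P h) \<tau> A" using e unfolding emb_def by blast
    then show ?thesis ..
  next
    case False
    then obtain x0 where x0: "x0 \<in> P h" "e x0 \<in> B" using e(2) by blast
    define i where "i = (LEAST x. x \<in> P h \<and> e x \<in> B)"
    have i: "i \<in> P h" "e i \<in> B" unfolding i_def using LeastI[of "\<lambda>x. x \<in> P h \<and> e x \<in> B", OF conjI[OF x0]] by auto
    have toB: "e y \<in> B" if "y \<in> P h" "i \<le> y" for y
    proof -
      have "e i \<le> e y" using strict_mono_on_mono_on[OF e(1) i(1) that] .
      moreover have "e y \<in> A \<union> B" using e(2) that(1) by blast
      ultimately show ?thesis using AB[of "e y" "e i"] i(2) by auto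
    qed
    have "emb le \<rho> (P h) \<tau> B"
    proof (cases "i = {#}")
      case True
      then have "\<forall>y\<in>P h. e y \<in> B" using toB by simp
      then show ?thesis using e unfolding emb_def by blast
    next
      case False
      have 1: "emb le \<rho> (P h) \<rho> {x\<in>P h. i \<le> x}" using ind i(1) False unfolding ind_iff by blast
      have 2: "emb le \<rho> {x\<in>P h. i \<le> x} \<tau> B"
        by (rule emb_map[of _ e]) (use e toB in \<open>auto simp: strict_mono_on_def\<close>)
      show ?thesis using emb_trans[OF 1 2] .
    qed
    then show ?thesis ..
  qed
qed

lemma prime_blocks:
  assumes ind: "indecomposable le ({#h#}, \<rho>)"
    and AB: "\<And>n x y. x \<in> A n \<Longrightarrow> y \<in> B n \<Longrightarrow> x < y"
    and ord: "\<And>n n' x y. n < n' \<Longrightarrow> x \<in> A n \<union> B n \<Longrightarrow> y \<in> A n' \<union> B n' \<Longrightarrow> x < y"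
  fixes N :: nat
  shows "emb le \<rho> (P h) \<tau> (\<Union>n\<le>N. A n \<union> B n) \<Longrightarrow> \<exists>n\<le>N. emb le \<rho> (P h) \<tau> (A n) \<or> emb le \<rho> (P h) \<tau> (B n)"
proof (induction N)
  case 0
  then have "emb le \<rho> (P h) \<tau> (A 0 \<union> B 0)" by simp
  then have "emb le \<rho> (P h) \<tau> (A 0) \<or> emb le \<rho> (P h) \<tau> (B 0)" by (rule prime[OF ind _ AB])
  then show ?case by (intro exI[of _ 0]) simp
next
  case (Suc N)
  have eq: "(\<Union>n\<le>Suc N. A n \<union> B n) = (\<Union>n\<le>N. A n \<union> B n) \<union> (A (Suc N) \<union> B (Suc N))"
    unfolding atMost_Suc by blast
  have em': "emb le \<rho> (P h) \<tau> ((\<Union>n\<le>N. A n \<union> B n) \<union> (A (Suc N) \<union> B (Suc N)))"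
    using Suc.prems unfolding eq .
  have ordd: "x < y" if xy: "x \<in> (\<Union>n\<le>N. A n \<union> B n)" "y \<in> A (Suc N) \<union> B (Suc N)" for x y
  proof -
    obtain n where n: "n \<le> N" "x \<in> A n \<union> B n" using xy(1) by auto
    show ?thesis by (rule ord[OF le_imp_less_Suc[OF n(1)] n(2) xy(2)])
  qed
  have "emb le \<rho> (P h) \<tau> (\<Union>n\<le>N. A n \<union> B n) \<or> emb le \<rho> (P h) \<tau> (A (Suc N) \<union> B (Suc N))"
    by (rule prime[OF ind em' ordd])
  then show ?case
  proof
    assume "emb le \<rho> (P h) \<tau> (\<Union>n\<le>N. A n \<union> B n)"
    then obtain n where "n \<le> N" "emb le \<rho> (P h) \<tau> (A n) \<or> emb le \<rho> (P h) \<tau> (B n)" using Suc.IH by blast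
    then show ?case by (intro exI[of _ n]) simp
  next
    assume "emb le \<rho> (P h) \<tau> (A (Suc N) \<union> B (Suc N))"
    then have "emb le \<rho> (P h) \<tau> (A (Suc N)) \<or> emb le \<rho> (P h) \<tau> (B (Suc N))" by (rule prime[OF ind _ AB])
    then show ?case by (intro exI[of _ "Suc N"]) simp
  qed
qed

end

lemma ge_self:
  fixes e :: "nat multiset \<Rightarrow> nat multiset"
  assumes sm: "strict_mono_on {..<M} e" and into: "e ` {..<M} \<subseteq> {..<M}"
  shows "x < M \<Longrightarrow> x \<le> e x"
proof (induction x rule: less_induct)
  case (less x)
  show ?case
  proof (rule ccontr)
    assume "\<not> x \<le> e x"
    then have lt: "e x < x" by simp
    have ex: "e x < M" using into less.prems by auto
    have "e x \<le> e (e x)" using less.IH[OF lt ex] .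
    moreover have "e (e x) < e x" using sm lt ex less.prems unfolding strict_mono_on_def by auto
    ultimately show False by simp
  qed
qed

lemma no_shrink:
  fixes e :: "nat multiset \<Rightarrow> nat multiset"
  assumes sm: "strict_mono_on {..<M} e" and into: "e ` {..<M} \<subseteq> {..<W}" and W: "W < M"
  shows False
proof -
  have "e ` {..<M} \<subseteq> {..<M}" using into W by auto
  then have "W \<le> e W" using ge_self[OF sm] W by blast
  moreover have "e W < W" using into W by auto
  ultimately show False by simp
qed

lemma ind_len:
  assumes ind: "indecomposable le (M, \<sigma>)" and ne: "M \<noteq> {#}"
  shows "\<exists>k. M = {#k#}"
proof (rule ccontr)
  assume nk: "\<nexists>k. M = {#k#}"
  define k where "k = Max (set_mset M)"
  have kin: "k \<in># M" unfolding k_def using ne by (simp add: Max_in)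
  have Mle: "\<forall>y\<in>#M. y \<le> k" unfolding k_def by simp
  have MP: "M \<in> P (Suc k)" using Mle by (auto simp: P_def less_Suc_eq_le)
  define c where "c = count M k"
  define R0 where "R0 = filter_mset (\<lambda>y. y < k) M"
  have Mdec: "M = replicate_mset c k + R0" and R0P: "R0 \<in> P k"
    using P_Suc_decomp[OF MP] unfolding c_def R0_def by auto
  have c1: "c \<ge> 1" using kin c_def by (simp add: Suc_le_eq)
  have xP: "x \<in> P (Suc k)" if "x < M" for x
  proof -
    have "M < {#Suc k#}" using MP P_lessThan by blast
    then show ?thesis using that P_lessThan by (metis lessThan_iff order.strict_trans)
  qed
  obtain d W where dW: "{#} < d" "d < M" "W < M"
    and tail: "\<And>y. d \<le> y \<Longrightarrow> y < M \<Longrightarrow> y = replicate_mset (count d k) k + filter_mset (\<lambda>y. y < k) y \<and> filter_mset (\<lambda>y. y < k) y < W"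
  proof (cases "R0 = {#}")
    case False
    show ?thesis
    proof (rule that[of "replicate_mset c k" R0])
      show "{#} < replicate_mset c k" using c1 by (cases c) auto
      show "replicate_mset c k < M" unfolding Mdec using rep_less[of "{#}" k R0 c c] R0P False by simp
      show "R0 < M" unfolding Mdec using rep_less[of R0 k "{#}" 0 c] R0P c1 by simp
      fix y assume y: "replicate_mset c k \<le> y" "y < M"
      have yd: "y = replicate_mset (count y k) k + filter_mset (\<lambda>y. y < k) y" "filter_mset (\<lambda>y. y < k) y \<in> P k"
        using P_Suc_decomp[OF xP[OF y(2)]] by auto
      have "replicate_mset c k + {#} \<le> replicate_mset (count y k) k + filter_mset (\<lambda>y. y < k) y"
        using y(1) yd(1) by simp
      then have a: "c \<le> count y k" unfolding rep_le[OF empty_P yd(2)] by auto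
      have "replicate_mset (count y k) k + filter_mset (\<lambda>y. y < k) y < replicate_mset c k + R0"
        using y(2) yd(1) Mdec by simp
      then have b: "count y k < c \<or> count y k = c \<and> filter_mset (\<lambda>y. y < k) y < R0"
        unfolding rep_less[OF yd(2) R0P] .
      show "y = replicate_mset (count (replicate_mset c k) k) k + filter_mset (\<lambda>y. y < k) y \<and> filter_mset (\<lambda>y. y < k) y < R0"
        using a b yd(1) by auto
    qed
  next
    case True
    have "c \<noteq> 1"
    proof
      assume "c = 1"
      then have "M = {#k#}" using Mdec True by simp
      then show False using nk by blast
    qed
    then have c2: "c \<ge> 2" using c1 by linarith
    show ?thesis
    proof (rule that[of "replicate_mset (c - 1) k" "{#k#}"])
      show "{#} < replicate_mset (c - 1) k" using c2 by (cases "c - 1") auto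
      show "replicate_mset (c - 1) k < M" unfolding Mdec True using rep_less[of "{#}" k "{#}" "c - 1" c] c2 by simp
      show "{#k#} < M" unfolding Mdec True using rep_less[of "{#}" k "{#}" 1 c] c2 by simp
      fix y assume y: "replicate_mset (c - 1) k \<le> y" "y < M"
      have yd: "y = replicate_mset (count y k) k + filter_mset (\<lambda>y. y < k) y" "filter_mset (\<lambda>y. y < k) y \<in> P k"
        using P_Suc_decomp[OF xP[OF y(2)]] by auto
      have "replicate_mset (c - 1) k + {#} \<le> replicate_mset (count y k) k + filter_mset (\<lambda>y. y < k) y"
        using y(1) yd(1) by simp
      then have a: "c - 1 \<le> count y k" unfolding rep_le[OF empty_P yd(2)] by auto
      have "replicate_mset (count y k) k + filter_mset (\<lambda>y. y < k) y < replicate_mset c k + {#}"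
        using y(2) yd(1) Mdec True by simp
      then have b: "count y k < c" unfolding rep_less[OF yd(2) empty_P] by simp
      have "count y k = c - 1" using a b by linarith
      then show "y = replicate_mset (count (replicate_mset (c - 1) k) k) k + filter_mset (\<lambda>y. y < k) y \<and> filter_mset (\<lambda>y. y < k) y < {#k#}"
        using yd by (auto simp: P_lessThan[symmetric])
    qed
  qed
  obtain e where e: "strict_mono_on {..<M} e" "e ` {..<M} \<subseteq> {d..<M}"
    using ind dW unfolding indecomposable_def seq_len_def seq_fun_def by auto
  define e' where "e' x = filter_mset (\<lambda>y. y < k) (e x)" for x
  have ed: "e x = replicate_mset (count d k) k + e' x" "e' x < W" if "x < M" for x
    using tail[of "e x"] e(2) that unfolding e'_def by auto
  have "strict_mono_on {..<M} e'"
  proof (rule strict_mono_onI)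
    fix x y assume "x \<in> {..<M}" "y \<in> {..<M}" "x < y"
    then have "e x < e y" using e(1) unfolding strict_mono_on_def by auto
    then show "e' x < e' y" using ed \<open>x \<in> {..<M}\<close> \<open>y \<in> {..<M}\<close> by (metis add_less_cancel_left lessThan_iff)
  qed
  moreover have "e' ` {..<M} \<subseteq> {..<W}" using ed by auto
  ultimately show False by (rule no_shrink[OF _ _ dW(3)])
qed


declare F.simps(2)[simp del] F_Node[simp]

primrec lbl :: "'q tree \<Rightarrow> 'q set" where
  "lbl (Leaf q) = {q}"
| "lbl (Node ts) = \<Union> (fset (fimage lbl ts))"

lemma finite_lbl: "finite (lbl t)"
  by (induction t) auto

lemma tree_in_Node: "tree_in R (Node ts) \<longleftrightarrow> ts \<noteq> {||} \<and> (\<forall>t. t |\<in>| ts \<longrightarrow> tree_in R t)"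
  by (auto elim: tree_in.cases intro: tree_in.intros)

lemma tree_in_Leaf: "tree_in R (Leaf q) \<longleftrightarrow> q \<in> R"
  by (auto elim: tree_in.cases intro: tree_in.intros)

lemma lbl_sub: "tree_in R t \<Longrightarrow> lbl t \<subseteq> R"
  by (induction rule: tree_in.induct) auto

lemma nfun_val:
  assumes ne: "xs \<noteq> []" and x: "x \<in> P (Suc (nH xs))"
  shows "\<exists>j<length xs. \<exists>r\<in>P (fst (xs!j)). nfun xs x = snd (xs!j) r"
proof -
  obtain n where "x \<in> Part1 xs n \<union> Part2 xs n" using x P_Suc_nH[OF ne] by auto
  then show ?thesis
  proof
    assume "x \<in> Part1 xs n"
    then obtain r where r: "r \<in> P (fst (xs ! (n mod length xs)))" "x = sh n (nH xs) r"
      unfolding Part1_def by auto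
    then show ?thesis using nfun_part1[OF ne r(1)] len_pos[OF ne] by (intro exI[of _ "n mod length xs"]) auto
  next
    assume "x \<in> Part2 xs n"
    then obtain r where r: "r \<in> P (nH xs)" "r \<notin> P (fst (xs ! (n mod length xs)))" "x = sh n (nH xs) r"
      unfolding Part2_def by auto
    then show ?thesis using nfun_part2[OF ne r(1,2)] nj0[OF ne] by (intro exI[of _ "nj0 xs"]) auto
  qed
qed

lemma nfun_eqI: "count y (nH xs) mod length xs = count x (nH xs) mod length xs \<Longrightarrow>
  filter_mset (\<lambda>z. z < nH xs) y = filter_mset (\<lambda>z. z < nH xs) x \<Longrightarrow> nfun xs y = nfun xs x"
  by (simp add: nfun_def Let_def)

lemma F_range: "tree_in R t \<Longrightarrow> snd (F t) ` P (fst (F t)) \<subseteq> lbl t"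
proof (induction rule: tree_in.induct)
  case (leaf_in q)
  then show ?case by (auto simp: P_0)
next
  case (node_in ts)
  have ne: "enum ts \<noteq> []" using enum_nonempty node_in(1) by blast
  show ?case
  proof
    fix v assume "v \<in> snd (F (Node ts)) ` P (fst (F (Node ts)))"
    then obtain x where x: "x \<in> P (Suc (nH (enum ts)))" "v = nfun (enum ts) x"
      by (auto simp: F_Node nseq_def)
    obtain j r where jr: "j < length (enum ts)" "r \<in> P (fst (enum ts ! j))" "v = snd (enum ts ! j) r"
      using nfun_val[OF ne x(1)] x(2) by auto
    have "enum ts ! j \<in> F ` fset ts" using jr(1) set_enum[of ts] nth_mem by metis
    then obtain t where t: "t |\<in>| ts" "enum ts ! j = F t" by auto
    then have "v \<in> lbl t" using node_in(2) jr by auto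
    then show "v \<in> lbl (Node ts)" using t by auto
  qed
qed

lemma set_enum_nth:
  assumes "i < length (enum ts)"
  obtains t where "t |\<in>| ts" "enum ts ! i = F t"
  using assms set_enum[of ts] nth_mem by (metis imageE)

lemma enum_nth_of:
  assumes "t |\<in>| ts"
  obtains i where "i < length (enum ts)" "enum ts ! i = F t"
  using assms set_enum[of ts] by (metis imageI in_set_conv_nth)

context qo begin

lemma vq_F: "tree_in Q t \<Longrightarrow> vq Q (F t)"
  using F_range lbl_sub unfolding vq_def by blast

lemma vq_enum: "tree_in Q (Node ts) \<Longrightarrow> \<forall>s\<in>set (enum ts). vq Q s"
  using set_enum[of ts] vq_F unfolding tree_in_Node by auto

lemma ind_nseq:
  assumes ne: "xs \<noteq> []" and vx: "\<forall>s\<in>set xs. vq Q s"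
  shows "indecomposable le ({#Suc (nH xs)#}, nfun xs)"
  unfolding ind_iff
proof (intro ballI impI)
  fix d assume d: "d \<in> P (Suc (nH xs))" "d \<noteq> {#}"
  define H where "H = nH xs"
  define m where "m = length xs"
  have m: "0 < m" using ne m_def by simp
  define N where "N = count d H"
  define M where "M = m * (N + 1)"
  have MN: "N < M"
  proof -
    have "1 * (N+1) \<le> m * (N+1)" using m by (intro mult_le_mono1) simp
    then show ?thesis unfolding M_def by simp
  qed
  define \<phi> where "\<phi> x = replicate_mset M H + x" for x
  have ddec: "d = replicate_mset N H + filter_mset (\<lambda>y. y < H) d" "filter_mset (\<lambda>y. y < H) d \<in> P H"
    using P_Suc_decomp[OF d(1)[folded H_def]] N_def by auto
  show "emb le (nfun xs) (P (Suc (nH xs))) (nfun xs) {x \<in> P (Suc (nH xs)). d \<le> x}"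
  proof (rule emb_map[of _ \<phi>])
    show "strict_mono_on (P (Suc (nH xs))) \<phi>" by (auto simp: strict_mono_on_def \<phi>_def)
    show "\<phi> ` P (Suc (nH xs)) \<subseteq> {x \<in> P (Suc (nH xs)). d \<le> x}"
    proof
      fix y assume "y \<in> \<phi> ` P (Suc (nH xs))"
      then obtain x where x: "x \<in> P (Suc H)" "y = \<phi> x" by (auto simp: H_def)
      have yP: "y \<in> P (Suc H)" using x by (auto simp: \<phi>_def P_def)
      have xdec: "x = replicate_mset (count x H) H + filter_mset (\<lambda>y. y < H) x" "filter_mset (\<lambda>y. y < H) x \<in> P H"
        using P_Suc_decomp[OF x(1)] by auto
      have "y = replicate_mset (M + count x H) H + filter_mset (\<lambda>y. y < H) x"
        using x(2) xdec(1) unfolding \<phi>_def rep_add by (metis add.assoc)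
      moreover have "replicate_mset N H + filter_mset (\<lambda>y. y < H) d \<le> replicate_mset (M + count x H) H + filter_mset (\<lambda>y. y < H) x"
        unfolding rep_le[OF ddec(2) xdec(2)] using MN by simp
      ultimately have "d \<le> y" using ddec(1) by simp
      then show "y \<in> {x \<in> P (Suc (nH xs)). d \<le> x}" using yP H_def by simp
    qed
    show "\<forall>x\<in>P (Suc (nH xs)). le (nfun xs x) (nfun xs (\<phi> x))"
    proof
      fix x assume x: "x \<in> P (Suc (nH xs))"
      have "count (\<phi> x) H = M + count x H" by (simp add: \<phi>_def)
      moreover have "(M + count x H) mod m = count x H mod m" unfolding M_def by (rule mod_mult_self4)
      moreover have "filter_mset (\<lambda>y. y < H) (\<phi> x) = filter_mset (\<lambda>y. y < H) x" by (simp add: \<phi>_def)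
      ultimately have "nfun xs (\<phi> x) = nfun xs x" unfolding H_def m_def by (intro nfun_eqI) simp_all
      then show "le (nfun xs x) (nfun xs (\<phi> x))" using nfun_Q[OF ne vx] x le_refl by auto
    qed
  qed
qed

lemma F_ind: "tree_in Q t \<Longrightarrow> indecomposable le ({#fst (F t)#}, snd (F t))"
proof (induction rule: tree_in.induct)
  case (leaf_in q)
  then show ?case unfolding ind_iff by (auto simp: P_0)
next
  case (node_in ts)
  have ne: "enum ts \<noteq> []" using enum_nonempty node_in(1) by blast
  have "tree_in Q (Node ts)" using node_in tree_in_Node by blast
  then show ?case using ind_nseq[OF ne vq_enum] by (simp add: F_Node nseq_def)
qed

end


context qo begin

lemma child_sle:
  assumes tin: "tree_in Q (Node ts)" and t: "t |\<in>| ts"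
  shows "sle (F t) (F (Node ts))"
proof -
  have ne: "enum ts \<noteq> []" using tin enum_nonempty unfolding tree_in_Node by blast
  obtain j where j: "j < length (enum ts)" "enum ts ! j = F t" using enum_nth_of[OF t] by blast
  have "emb le (snd (enum ts ! j)) (P (fst (enum ts ! j))) (nfun (enum ts)) (Part1 (enum ts) j)"
    by (rule child_to_Part1[OF ne vq_enum[OF tin]]) (use j in simp)
  then have "emb le (snd (enum ts ! j)) (P (fst (enum ts ! j))) (nfun (enum ts)) (P (Suc (nH (enum ts))))"
    by (rule emb_mono) (use Part1_sub_P[OF ne] in auto)
  then show ?thesis unfolding j(2) by (simp add: nseq_def)
qed

lemma tree_le_sle: "tree_le le s t \<Longrightarrow> tree_in Q s \<Longrightarrow> tree_in Q t \<Longrightarrow> sle (F s) (F t)"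
proof (induction rule: tree_le.induct)
  case (leaf_leaf x y)
  have 1: "emb le (\<lambda>_. x) {{#}} (\<lambda>_. y) {{#}}"
    unfolding emb_def by (rule exI[of _ id]) (simp add: strict_mono_on_def leaf_leaf(1))
  have 2: "F (Leaf x) = (0, \<lambda>_. x)" "F (Leaf y) = (0, \<lambda>_. y)" by simp_all
  show ?case unfolding 2 fst_conv snd_conv P_0 by (rule 1)
next
  case (leaf_node t ts x)
  have "tree_in Q t" using leaf_node(5,1) unfolding tree_in_Node by blast
  then have "sle (F (Leaf x)) (F t)" using leaf_node by blast
  then show ?case using child_sle[OF leaf_node(5,1)] by (rule sle_trans)
next
  case (node_node ss ts)
  have nx: "enum ss \<noteq> []" using node_node(2) enum_nonempty unfolding tree_in_Node by blast
  have ny: "enum ts \<noteq> []" using node_node(3) enum_nonempty unfolding tree_in_Node by blast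
  have "\<forall>i<length (enum ss). \<exists>j<length (enum ts). sle (enum ss ! i) (enum ts ! j)"
  proof (intro allI impI)
    fix i assume i: "i < length (enum ss)"
    obtain s where s: "s |\<in>| ss" "enum ss ! i = F s" using set_enum_nth[OF i] by blast
    obtain t where t: "t |\<in>| ts" "tree_le le s t" "tree_in Q s \<Longrightarrow> tree_in Q t \<Longrightarrow> sle (F s) (F t)"
      using node_node(1) s(1) by blast
    have "tree_in Q s" "tree_in Q t" using node_node(2,3) s(1) t(1) unfolding tree_in_Node by blast+
    then have "sle (F s) (F t)" using t(3) by blast
    moreover obtain j where "j < length (enum ts)" "enum ts ! j = F t" using enum_nth_of[OF t(1)] by blast
    ultimately show "\<exists>j<length (enum ts). sle (enum ss ! i) (enum ts ! j)" using s(2) by metis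
  qed
  then have "sle (nseq (enum ss)) (nseq (enum ts))"
    by (rule node_le[OF nx ny vq_enum[OF node_node(2)] vq_enum[OF node_node(3)]])
  then show ?case by simp
qed

lemma leaf_below: "tree_in Q t \<Longrightarrow> x \<in> P (fst (F t)) \<Longrightarrow> le q (snd (F t) x) \<Longrightarrow> tree_le le (Leaf q) t"
proof (induction arbitrary: x rule: tree_in.induct)
  case (leaf_in y)
  then show ?case by (auto intro: tree_le.intros)
next
  case (node_in ts)
  have ne: "enum ts \<noteq> []" using enum_nonempty node_in(1) by blast
  have x: "x \<in> P (Suc (nH (enum ts)))" using node_in(3) by (simp add: nseq_def)
  obtain j r where jr: "j < length (enum ts)" "r \<in> P (fst (enum ts ! j))" "nfun (enum ts) x = snd (enum ts ! j) r"
    using nfun_val[OF ne x] by blast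
  obtain t where t: "t |\<in>| ts" "enum ts ! j = F t" using set_enum_nth[OF jr(1)] by blast
  have "tree_le le (Leaf q) t" using node_in(2) t jr node_in(4) by (auto simp: nseq_def)
  then show ?case by (rule tree_le.leaf_node[OF t(1)])
qed

end


context qo begin

lemma node_child_bound:
  assumes nx: "xs \<noteq> []" and ny: "ys \<noteq> []" and vx: "\<forall>s\<in>set xs. vq Q s" and vy: "\<forall>s\<in>set ys. vq Q s"
    and em: "emb le (nfun xs) (P (Suc (nH xs))) (nfun ys) (P (Suc (nH ys)))"
    and i: "i < length xs" and ind: "indecomposable le ({#fst (xs!i)#}, snd (xs!i))"
  shows "\<exists>j<length ys. sle (xs!i) (ys!j)"
proof -
  obtain e where e: "strict_mono_on (P (Suc (nH xs))) e" "e ` P (Suc (nH xs)) \<subseteq> P (Suc (nH ys))"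
    "\<forall>x\<in>P (Suc (nH xs)). le (nfun xs x) (nfun ys (e x))"
    using em unfolding emb_def by blast
  have A: "emb le (snd (xs!i)) (P (fst (xs!i))) (nfun xs) (Part1 xs i)"
    by (rule child_to_Part1[OF nx vx]) (use i in simp)
  define z where "z = sh (Suc i) (nH xs) {#}"
  have zP: "z \<in> P (Suc (nH xs))" unfolding z_def by (rule sh_P) simp
  have zB: "z \<in> Blk (nH xs) (Suc i)" unfolding z_def Blk_def by simp
  have "e z \<in> P (Suc (nH ys))" using e(2) zP by blast
  then obtain N where N: "e z \<in> Blk (nH ys) N" unfolding P_Suc_Blk by blast
  have sub: "e ` Part1 xs i \<subseteq> (\<Union>n\<le>N. Part1 ys n \<union> Part2 ys n)"
  proof
    fix y assume "y \<in> e ` Part1 xs i"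
    then obtain x where x: "x \<in> Part1 xs i" "y = e x" by blast
    have xP: "x \<in> P (Suc (nH xs))" using x(1) Part1_sub_P[OF nx] by blast
    have "x \<in> Blk (nH xs) i" using x(1) Part_sub[OF nx] by blast
    then have "x < z" by (rule Blk_less[OF lessI _ zB])
    then have ex: "e x < e z" using e(1) xP zP unfolding strict_mono_on_def by blast
    have "e x \<in> P (Suc (nH ys))" using e(2) xP by blast
    then obtain n where n: "e x \<in> Blk (nH ys) n" unfolding P_Suc_Blk by blast
    have "n \<le> N"
    proof (rule ccontr)
      assume "\<not> n \<le> N"
      then have "N < n" by simp
      then have "e z < e x" by (rule Blk_less[OF _ N n])
      then show False using ex by simp
    qed
    then show "y \<in> (\<Union>n\<le>N. Part1 ys n \<union> Part2 ys n)" using n x(2) Blk_Part[OF ny] by blast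
  qed
  have B: "emb le (nfun xs) (Part1 xs i) (nfun ys) (\<Union>n\<le>N. Part1 ys n \<union> Part2 ys n)"
  proof (rule emb_map[of _ e])
    show "strict_mono_on (Part1 xs i) e" using e(1) Part1_sub_P[OF nx] unfolding strict_mono_on_def by blast
    show "e ` Part1 xs i \<subseteq> (\<Union>n\<le>N. Part1 ys n \<union> Part2 ys n)" by (rule sub)
    show "\<forall>x\<in>Part1 xs i. le (nfun xs x) (nfun ys (e x))" using e(3) Part1_sub_P[OF nx] by blast
  qed
  have C: "emb le (snd (xs!i)) (P (fst (xs!i))) (nfun ys) (\<Union>n\<le>N. Part1 ys n \<union> Part2 ys n)"
    by (rule emb_trans[OF A B])
  have AB: "\<And>n x y. x \<in> Part1 ys n \<Longrightarrow> y \<in> Part2 ys n \<Longrightarrow> x < y" using Part12_less[OF ny] by blast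
  have ord: "\<And>n n' x y. n < n' \<Longrightarrow> x \<in> Part1 ys n \<union> Part2 ys n \<Longrightarrow> y \<in> Part1 ys n' \<union> Part2 ys n' \<Longrightarrow> x < y"
  proof -
    fix n n' x y assume a: "n < n'" "x \<in> Part1 ys n \<union> Part2 ys n" "y \<in> Part1 ys n' \<union> Part2 ys n'"
    have "x \<in> Blk (nH ys) n" "y \<in> Blk (nH ys) n'" using a(2,3) Blk_Part[OF ny] by blast+
    then show "x < y" using Blk_less[OF a(1)] by blast
  qed
  obtain n where n: "n \<le> N" "emb le (snd (xs!i)) (P (fst (xs!i))) (nfun ys) (Part1 ys n) \<or>
      emb le (snd (xs!i)) (P (fst (xs!i))) (nfun ys) (Part2 ys n)"
  proof -
    have "\<exists>n\<le>N. emb le (snd (xs!i)) (P (fst (xs!i))) (nfun ys) (Part1 ys n) \<or>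
      emb le (snd (xs!i)) (P (fst (xs!i))) (nfun ys) (Part2 ys n)"
      apply (rule prime_blocks[where A="Part1 ys" and B="Part2 ys", OF ind])
        apply (erule (1) AB)
       apply (erule (2) ord)
      apply (rule C)
      done
    then show ?thesis using that by blast
  qed
  from n(2) show ?thesis
  proof
    assume "emb le (snd (xs!i)) (P (fst (xs!i))) (nfun ys) (Part1 ys n)"
    then have "sle (xs!i) (ys ! (n mod length ys))" using Part1_to_child[OF ny vy] by (rule emb_trans)
    moreover have "n mod length ys < length ys" using ny by simp
    ultimately show ?thesis by blast
  next
    assume "emb le (snd (xs!i)) (P (fst (xs!i))) (nfun ys) (Part2 ys n)"
    then have "sle (xs!i) (ys ! nj0 ys)" using Part2_to_j0[OF ny vy] by (rule emb_trans)
    then show ?thesis using nj0(1)[OF ny] by blast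
  qed
qed

lemma sle_tree_le: "tree_in Q s \<Longrightarrow> tree_in Q t \<Longrightarrow> sle (F s) (F t) \<Longrightarrow> tree_le le s t"
proof (induction s arbitrary: t)
  case (Leaf q)
  obtain e where e: "e ` P 0 \<subseteq> P (fst (F t))" "\<forall>i\<in>P 0. le q (snd (F t) (e i))"
    using Leaf(3) unfolding emb_def by auto
  have "e {#} \<in> P (fst (F t))" "le q (snd (F t) (e {#}))" using e by (auto simp: P_0)
  then show ?case using leaf_below[OF Leaf(2)] by blast
next
  case (Node ss)
  have nx: "enum ss \<noteq> []" using Node(2) enum_nonempty unfolding tree_in_Node by blast
  show ?case
  proof (cases t)
    case (Leaf y)
    obtain e where e: "strict_mono_on (P (Suc (nH (enum ss)))) e" "e ` P (Suc (nH (enum ss))) \<subseteq> P 0"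
      using Node(4) unfolding Leaf emb_def by (auto simp: nseq_def)
    have a: "{#} \<in> P (Suc (nH (enum ss)))" "{#nH (enum ss)#} \<in> P (Suc (nH (enum ss)))" by (auto simp: P_def)
    then have "e {#} < e {#nH (enum ss)#}" using e(1) unfolding strict_mono_on_def by auto
    moreover have "e {#} = {#}" "e {#nH (enum ss)#} = {#}" using e(2) a unfolding P_0 image_subset_iff by blast+
    ultimately show ?thesis by simp
  next
    case (Node ts)
    note t = this
    have ny: "enum ts \<noteq> []" using Node.prems(2) enum_nonempty unfolding t tree_in_Node by blast
    have em: "emb le (nfun (enum ss)) (P (Suc (nH (enum ss)))) (nfun (enum ts)) (P (Suc (nH (enum ts))))"
      using Node.prems(3) unfolding t by (simp add: nseq_def)
    have "\<forall>s'. s' |\<in>| ss \<longrightarrow> (\<exists>t'. t' |\<in>| ts \<and> tree_le le s' t')"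
    proof (intro allI impI)
      fix s' assume s': "s' |\<in>| ss"
      obtain i where i: "i < length (enum ss)" "enum ss ! i = F s'" using enum_nth_of[OF s'] by blast
      have tins: "tree_in Q s'" using Node.prems(1) s' unfolding tree_in_Node by blast
      obtain j where j: "j < length (enum ts)" "sle (enum ss ! i) (enum ts ! j)"
        using node_child_bound[OF nx ny vq_enum[OF Node.prems(1)] vq_enum[OF Node.prems(2)[unfolded t]] em i(1)]
          F_ind[OF tins] i(2) by auto
      obtain t' where t': "t' |\<in>| ts" "enum ts ! j = F t'" using set_enum_nth[OF j(1)] by blast
      have tint: "tree_in Q t'" using Node.prems(2) t'(1) unfolding t tree_in_Node by blast
      have "tree_le le s' t'" using Node.IH[OF _ tins tint] s' j(2) i(2) t'(2) by simp
      then show "\<exists>t'. t' |\<in>| ts \<and> tree_le le s' t'" using t'(1) by blast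
    qed
    then show ?thesis unfolding t by (rule tree_le.node_node)
  qed
qed

end


primrec Can :: "nat \<Rightarrow> 'q set \<Rightarrow> 'q tree set" where
  "Can 0 R = Leaf ` R"
| "Can (Suc h) R = Can h R \<union> {Node ts | ts. ts \<noteq> {||} \<and> fset ts \<subseteq> Can h R}"

lemma finite_Can: "finite R \<Longrightarrow> finite (Can h R)"
proof (induction h)
  case 0 then show ?case by simp
next
  case (Suc h)
  have "{Node ts | ts. ts \<noteq> {||} \<and> fset ts \<subseteq> Can h R} \<subseteq> (\<lambda>S. Node (Abs_fset S)) ` Pow (Can h R)"
  proof
    fix t assume "t \<in> {Node ts | ts. ts \<noteq> {||} \<and> fset ts \<subseteq> Can h R}"
    then obtain ts where "t = Node ts" "fset ts \<subseteq> Can h R" by blast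
    then show "t \<in> (\<lambda>S. Node (Abs_fset S)) ` Pow (Can h R)"
      by (intro image_eqI[of _ _ "fset ts"]) (auto simp: fset_inverse)
  qed
  moreover have "finite ((\<lambda>S. Node (Abs_fset S)) ` Pow (Can h R))" using Suc by simp
  ultimately show ?case using Suc by (simp add: finite_subset)
qed

lemma Can_tree_in: "t \<in> Can h R \<Longrightarrow> tree_in R t"
proof (induction h arbitrary: t)
  case 0 then show ?case by (auto intro: tree_in.intros)
next
  case (Suc h)
  then show ?case by (auto intro!: tree_in.intros)
qed

lemma Can_mono: "Can h R \<subseteq> Can (Suc h) R" by simp

lemma tree_in_mono: "tree_in R t \<Longrightarrow> R \<subseteq> Q \<Longrightarrow> tree_in Q t"
  by (induction rule: tree_in.induct) (auto intro: tree_in.intros)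

lemma covers_empty: "covers le \<rho> {} []"
  unfolding covers_def by simp

lemma covers_append:
  assumes c1: "covers le \<rho> D1 L1" and c2: "covers le \<rho> D2 L2" and ord: "\<And>x y. x \<in> D1 \<Longrightarrow> y \<in> D2 \<Longrightarrow> x < y"
  shows "covers le \<rho> (D1 \<union> D2) (L1 @ L2)"
  unfolding covers_def
proof (intro allI impI)
  fix \<tau> and S :: "nat \<Rightarrow> nat multiset set"
  assume So: "\<forall>i j x y. i < j \<longrightarrow> j < length (L1 @ L2) \<longrightarrow> x \<in> S i \<longrightarrow> y \<in> S j \<longrightarrow> x < y"
    and Se: "\<forall>i<length (L1 @ L2). emb le (snd ((L1 @ L2) ! i)) (P (fst ((L1 @ L2) ! i))) \<tau> (S i)"
  have e1: "emb le \<rho> D1 \<tau> (\<Union>i<length L1. S i)"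
    using c1 unfolding covers_def
  proof (elim allE impE)
    show "\<forall>i j x y. i < j \<longrightarrow> j < length L1 \<longrightarrow> x \<in> S i \<longrightarrow> y \<in> S j \<longrightarrow> x < y" using So by auto
    show "\<forall>i<length L1. emb le (snd (L1 ! i)) (P (fst (L1 ! i))) \<tau> (S i)"
    proof (intro allI impI)
      fix i assume "i < length L1"
      then show "emb le (snd (L1 ! i)) (P (fst (L1 ! i))) \<tau> (S i)"
        using Se[rule_format, of i] by (simp add: nth_append)
    qed
  qed
  have e2: "emb le \<rho> D2 \<tau> (\<Union>i<length L2. S (length L1 + i))"
    using c2 unfolding covers_def
  proof (elim allE[of _ \<tau>] allE[of _ "\<lambda>i. S (length L1 + i)"] impE)
    show "\<forall>i j x y. i < j \<longrightarrow> j < length L2 \<longrightarrow> x \<in> S (length L1 + i) \<longrightarrow> y \<in> S (length L1 + j) \<longrightarrow> x < y"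
    proof (intro allI impI)
      fix i j x y assume a: "i < j" "j < length L2" "x \<in> S (length L1 + i)" "y \<in> S (length L1 + j)"
      show "x < y" using So[rule_format, of "length L1 + i" "length L1 + j" x y] a by simp
    qed
    show "\<forall>i<length L2. emb le (snd (L2 ! i)) (P (fst (L2 ! i))) \<tau> (S (length L1 + i))"
    proof (intro allI impI)
      fix i assume "i < length L2"
      then show "emb le (snd (L2 ! i)) (P (fst (L2 ! i))) \<tau> (S (length L1 + i))"
        using Se[rule_format, of "length L1 + i"] by (simp add: nth_append)
    qed
  qed
  have ordS: "x < y" if xy: "x \<in> (\<Union>i<length L1. S i)" "y \<in> (\<Union>i<length L2. S (length L1 + i))" for x y
  proof -
    obtain i j where "i < length L1" "x \<in> S i" "j < length L2" "y \<in> S (length L1 + j)" using xy by blast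
    then show ?thesis using So[rule_format, of i "length L1 + j" x y] by simp
  qed
  have E: "emb le \<rho> (D1 \<union> D2) \<tau> ((\<Union>i<length L1. S i) \<union> (\<Union>i<length L2. S (length L1 + i)))"
    by (rule emb_Un[OF ord ordS e1 e2])
  have Sub: "(\<Union>i<length L1. S i) \<union> (\<Union>i<length L2. S (length L1 + i)) \<subseteq> (\<Union>i<length (L1 @ L2). S i)"
  proof
    fix x assume "x \<in> (\<Union>i<length L1. S i) \<union> (\<Union>i<length L2. S (length L1 + i))"
    then obtain i where "i < length (L1 @ L2)" "x \<in> S i"
    proof
      assume "x \<in> (\<Union>i<length L1. S i)"
      then obtain i where "i < length L1" "x \<in> S i" by blast
      then show thesis using that[of i] by simp
    next
      assume "x \<in> (\<Union>i<length L2. S (length L1 + i))"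
      then obtain i where "i < length L2" "x \<in> S (length L1 + i)" by blast
      then show thesis using that[of "length L1 + i"] by simp
    qed
    then show "x \<in> (\<Union>i<length (L1 @ L2). S i)" by blast
  qed
  show "emb le \<rho> (D1 \<union> D2) \<tau> (\<Union>i<length (L1 @ L2). S i)" by (rule emb_mono[OF E subset_refl Sub])
qed

context qo begin

lemma covers_single: "emb le \<rho> D (snd a) (P (fst a)) \<Longrightarrow> covers le \<rho> D [a]"
proof -
  have "(\<Union>i<Suc 0. S i) = S 0" for S :: "nat \<Rightarrow> nat multiset set" by auto
  then show "emb le \<rho> D (snd a) (P (fst a)) \<Longrightarrow> covers le \<rho> D [a]"
    unfolding covers_def by (auto intro: emb_trans)
qed

lemma covers_pre: "emb le \<rho> D \<rho>' D' \<Longrightarrow> covers le \<rho>' D' L \<Longrightarrow> covers le \<rho> D L"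
  unfolding covers_def by (meson emb_trans)

lemma blk_to:
  assumes "\<rho> ` P (Suc k) \<subseteq> Q"
  shows "emb le (\<lambda>r. \<rho> (sh n k r)) (P k) \<rho> (Blk k n)"
proof (rule emb_map[OF sh_strict_mono])
  show "sh n k ` P k \<subseteq> Blk k n" by (simp add: Blk_def)
  show "\<forall>x\<in>P k. le (\<rho> (sh n k x)) (\<rho> (sh n k x))" using assms sh_P le_refl by blast
qed

lemma blk_from:
  assumes "\<rho> ` P (Suc k) \<subseteq> Q"
  shows "emb le \<rho> (Blk k n) (\<lambda>r. \<rho> (sh n k r)) (P k)"
  unfolding Blk_def
proof (rule emb_inv[OF sh_strict_mono])
  show "\<forall>x\<in>P k. le (\<rho> (sh n k x)) (\<rho> (sh n k x))" using assms sh_P le_refl by blast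
qed simp

end


context qo begin

lemma step:
  assumes Rf: "finite R" and RQ: "R \<subseteq> Q" and rng: "\<rho> ` P (Suc h) \<subseteq> R"
    and IH: "\<And>\<rho>'. \<rho>' ` P h \<subseteq> R \<Longrightarrow> \<exists>L. L \<noteq> [] \<and> set L \<subseteq> Can h R \<and> (\<forall>u\<in>set L. sle (F u) (h, \<rho>')) \<and> covers le \<rho>' (P h) (map F L)"
  shows "\<exists>t0 N Ls. t0 \<in> Can (Suc h) R \<and> sle (F t0) (Suc h, \<rho>) \<and>
     emb le \<rho> (\<Union>n\<in>{N..}. Blk h n) (snd (F t0)) (P (fst (F t0))) \<and>
     (\<forall>n. Ls n \<noteq> [] \<and> set (Ls n) \<subseteq> Can h R \<and> (\<forall>u\<in>set (Ls n). emb le (snd (F u)) (P (fst (F u))) \<rho> (Blk h n)) \<and>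
        covers le \<rho> (Blk h n) (map F (Ls n)))"
proof -
  have \<rho>Q: "\<rho> ` P (Suc h) \<subseteq> Q" using rng RQ by blast
  have "\<forall>n. \<exists>L. L \<noteq> [] \<and> set L \<subseteq> Can h R \<and> (\<forall>u\<in>set L. sle (F u) (h, \<lambda>r. \<rho> (sh n h r))) \<and>
      covers le (\<lambda>r. \<rho> (sh n h r)) (P h) (map F L)"
  proof
    fix n
    have "(\<lambda>r. \<rho> (sh n h r)) ` P h \<subseteq> R" using rng sh_P by blast
    then show "\<exists>L. L \<noteq> [] \<and> set L \<subseteq> Can h R \<and> (\<forall>u\<in>set L. sle (F u) (h, \<lambda>r. \<rho> (sh n h r))) \<and>
      covers le (\<lambda>r. \<rho> (sh n h r)) (P h) (map F L)" by (rule IH)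
  qed
  then obtain Ls where Ls: "\<And>n. Ls n \<noteq> [] \<and> set (Ls n) \<subseteq> Can h R \<and> (\<forall>u\<in>set (Ls n). sle (F u) (h, \<lambda>r. \<rho> (sh n h r))) \<and>
      covers le (\<lambda>r. \<rho> (sh n h r)) (P h) (map F (Ls n))" by metis
  have LsB: "emb le (snd (F u)) (P (fst (F u))) \<rho> (Blk h n)" if "u \<in> set (Ls n)" for n u
  proof -
    have "sle (F u) (h, \<lambda>r. \<rho> (sh n h r))" using Ls that by blast
    then show ?thesis using blk_to[OF \<rho>Q, of n] by (simp add: emb_trans)
  qed
  have LsC: "covers le \<rho> (Blk h n) (map F (Ls n))" for n
    using covers_pre[OF blk_from[OF \<rho>Q]] Ls by blast
  define All where "All = (\<Union>n. set (Ls n))"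
  have AllC: "All \<subseteq> Can h R" using Ls unfolding All_def by blast
  have finAll: "finite All" using finite_subset[OF AllC finite_Can[OF Rf]] .
  define U where "U = {u \<in> All. infinite {n. u \<in> set (Ls n)}}"
  define Bad where "Bad = (\<Union>u\<in>All - U. {n. u \<in> set (Ls n)})"
  have fB: "finite Bad" unfolding Bad_def U_def using finAll by auto
  define N where "N = Suc (Max Bad)"
  have N: "n < N" if "n \<in> Bad" for n unfolding N_def using Max_ge[OF fB that] by simp
  have LsU: "set (Ls n) \<subseteq> U" if "N \<le> n" for n
  proof
    fix u assume u: "u \<in> set (Ls n)"
    then have "u \<in> All" unfolding All_def by blast
    moreover have "u \<notin> All - U"
    proof
      assume "u \<in> All - U"
      then have "n \<in> Bad" unfolding Bad_def using u by blast
      then show False using N that by fastforce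
    qed
    ultimately show "u \<in> U" by blast
  qed
  have Une: "U \<noteq> {}"
  proof -
    have "hd (Ls N) \<in> set (Ls N)" using Ls[of N] by simp
    then show ?thesis using LsU[of N] by blast
  qed
  have finU: "finite U" using finAll unfolding U_def by simp
  have UC: "U \<subseteq> Can h R" using AllC unfolding U_def by blast
  define T' where "T' = Abs_fset U"
  have fT': "fset T' = U" unfolding T'_def using finU by (simp add: Abs_fset_inverse)
  define t0 where "t0 = Node T'"
  have T'ne: "T' \<noteq> {||}" using Une fT' by auto
  have t0C: "t0 \<in> Can (Suc h) R" unfolding t0_def using T'ne fT' UC by auto
  define xs where "xs = enum T'"
  have nx: "xs \<noteq> []" unfolding xs_def using enum_nonempty[OF T'ne] .
  have setxs: "set xs = F ` U" unfolding xs_def set_enum fT' ..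
  have vx: "\<forall>s\<in>set xs. vq Q s"
  proof
    fix s assume "s \<in> set xs"
    then obtain u where "u \<in> U" "s = F u" using setxs by blast
    then show "vq Q s" using UC Can_tree_in tree_in_mono[OF _ RQ] vq_F by blast
  qed
  have Ft0: "F t0 = (Suc (nH xs), nfun xs)" unfolding t0_def xs_def by (simp add: nseq_def)
  have io: "\<forall>i<length xs. \<forall>M. \<exists>n\<ge>M. emb le (snd (xs!i)) (P (fst (xs!i))) \<rho> (Blk h n)"
  proof (intro allI impI)
    fix i M assume i: "i < length xs"
    then obtain u where u: "u \<in> U" "xs ! i = F u" using setxs nth_mem by (metis imageE)
    then have "infinite {n. u \<in> set (Ls n)}" unfolding U_def by blast
    then have "\<exists>n\<ge>M. u \<in> set (Ls n)"
    proof (rule contrapos_np)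
      assume "\<not> (\<exists>n\<ge>M. u \<in> set (Ls n))"
      then have "{n. u \<in> set (Ls n)} \<subseteq> {..<M}" by (auto simp: not_le[symmetric])
      then show "finite {n. u \<in> set (Ls n)}" using finite_subset by blast
    qed
    then obtain n where "M \<le> n" "u \<in> set (Ls n)" by blast
    then show "\<exists>n\<ge>M. emb le (snd (xs!i)) (P (fst (xs!i))) \<rho> (Blk h n)" using LsB u(2) by metis
  qed
  have A: "sle (F t0) (Suc h, \<rho>)"
    unfolding Ft0 fst_conv snd_conv by (rule emb_node_into[OF nx vx io])
  have cov: "\<forall>n\<ge>N. set (map F (Ls n)) \<subseteq> set xs \<and> covers le \<rho> (Blk h n) (map F (Ls n))"
    using LsU LsC setxs by auto
  have B: "emb le \<rho> (\<Union>n\<in>{N..}. Blk h n) (snd (F t0)) (P (fst (F t0)))"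
    unfolding Ft0 fst_conv snd_conv by (rule cover_node[OF nx vx cov])
  have C: "\<forall>n. Ls n \<noteq> [] \<and> set (Ls n) \<subseteq> Can h R \<and> (\<forall>u\<in>set (Ls n). emb le (snd (F u)) (P (fst (F u))) \<rho> (Blk h n)) \<and>
        covers le \<rho> (Blk h n) (map F (Ls n))"
    using Ls LsB LsC by blast
  show ?thesis using t0C A B C by blast
qed

end


context qo begin

lemma G:
  assumes Rf: "finite R" and RQ: "R \<subseteq> Q"
  shows "\<rho> ` P h \<subseteq> R \<Longrightarrow> \<exists>L. L \<noteq> [] \<and> set L \<subseteq> Can h R \<and> (\<forall>u\<in>set L. sle (F u) (h, \<rho>)) \<and> covers le \<rho> (P h) (map F L)"
proof (induction h arbitrary: \<rho>)
  case 0
  define q where "q = \<rho> {#}"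
  have qR: "q \<in> R" using 0 unfolding q_def by (auto simp: P_0)
  then have qQ: "q \<in> Q" using RQ by blast
  have lq: "le q (\<rho> {#})" "le (\<rho> {#}) q" using le_refl[OF qQ] unfolding q_def by simp_all
  have e1: "emb le (\<lambda>_. q) {{#}} \<rho> {{#}}"
    unfolding emb_def by (rule exI[of _ id]) (simp add: strict_mono_on_def lq)
  have e2: "emb le \<rho> {{#}} (\<lambda>_. q) {{#}}"
    unfolding emb_def by (rule exI[of _ id]) (simp add: strict_mono_on_def lq)
  have FL: "F (Leaf q) = (0, \<lambda>_. q)" by simp
  have "sle (F (Leaf q)) (0, \<rho>)" unfolding FL fst_conv snd_conv P_0 by (rule e1)
  moreover have "covers le \<rho> (P 0) [F (Leaf q)]" by (rule covers_single) (unfold FL fst_conv snd_conv P_0, rule e2)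
  moreover have "Leaf q \<in> Can 0 R" using qR by simp
  ultimately show ?case by (intro exI[of _ "[Leaf q]"]) simp
next
  case (Suc h)
  obtain t0 N Ls where t0: "t0 \<in> Can (Suc h) R" "sle (F t0) (Suc h, \<rho>)"
     "emb le \<rho> (\<Union>n\<in>{N..}. Blk h n) (snd (F t0)) (P (fst (F t0)))"
     and Ls: "\<And>n. Ls n \<noteq> [] \<and> set (Ls n) \<subseteq> Can h R \<and> (\<forall>u\<in>set (Ls n). emb le (snd (F u)) (P (fst (F u))) \<rho> (Blk h n)) \<and>
        covers le \<rho> (Blk h n) (map F (Ls n))"
    using step[OF Rf RQ Suc.prems Suc.IH] by blast
  define L where "L = concat (map Ls [0..<N]) @ [t0]"
  have cov1: "covers le \<rho> (\<Union>n<M. Blk h n) (map F (concat (map Ls [0..<M])))" for M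
  proof (induction M)
    case 0 then show ?case using covers_empty by simp
  next
    case (Suc M)
    have eq1: "(\<Union>n<Suc M. Blk h n) = (\<Union>n<M. Blk h n) \<union> Blk h M" by (auto simp: lessThan_Suc)
    have eq2: "map F (concat (map Ls [0..<Suc M])) = map F (concat (map Ls [0..<M])) @ map F (Ls M)" by simp
    have ord: "x < y" if xy: "x \<in> (\<Union>n<M. Blk h n)" "y \<in> Blk h M" for x y
      using xy Blk_less by blast
    show ?case unfolding eq1 eq2 by (rule covers_append[OF Suc.IH _ ord]) (use Ls in blast)
  qed
  have cov2: "covers le \<rho> (\<Union>n\<in>{N..}. Blk h n) [F t0]" by (rule covers_single[OF t0(3)])
  have ord: "x < y" if xy: "x \<in> (\<Union>n<N. Blk h n)" "y \<in> (\<Union>n\<in>{N..}. Blk h n)" for x y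
  proof -
    obtain n n' where "n < N" "x \<in> Blk h n" "N \<le> n'" "y \<in> Blk h n'" using xy by blast
    then show ?thesis using Blk_less[of n n'] by simp
  qed
  have cov: "covers le \<rho> ((\<Union>n<N. Blk h n) \<union> (\<Union>n\<in>{N..}. Blk h n)) (map F (concat (map Ls [0..<N])) @ [F t0])"
    by (rule covers_append[OF cov1 cov2 ord])
  have un: "(\<Union>n<N. Blk h n) \<union> (\<Union>n\<in>{N..}. Blk h n) = P (Suc h)"
  proof -
    have "(\<Union>n<N. Blk h n) \<union> (\<Union>n\<in>{N..}. Blk h n) = (\<Union>n\<in>{..<N} \<union> {N..}. Blk h n)" by blast
    also have "{..<N} \<union> {N..} = UNIV" by auto
    finally show ?thesis unfolding P_Suc_Blk by simp
  qed
  have "covers le \<rho> (P (Suc h)) (map F L)" using cov unfolding un L_def by simp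
  moreover have "L \<noteq> []" unfolding L_def by simp
  moreover have "set L \<subseteq> Can (Suc h) R" unfolding L_def using Ls t0(1) by auto
  moreover have "\<forall>u\<in>set L. sle (F u) (Suc h, \<rho>)"
  proof
    fix u assume "u \<in> set L"
    then have "u = t0 \<or> (\<exists>n. u \<in> set (Ls n))" unfolding L_def by auto
    then show "sle (F u) (Suc h, \<rho>)"
    proof
      assume "\<exists>n. u \<in> set (Ls n)"
      then obtain n where "u \<in> set (Ls n)" by blast
      then have "emb le (snd (F u)) (P (fst (F u))) \<rho> (Blk h n)" using Ls by blast
      then show ?thesis unfolding fst_conv snd_conv by (rule emb_mono[OF _ subset_refl Blk_P])
    qed (use t0 in simp)
  qed
  ultimately show ?case by blast
qed

lemma iv:
  assumes vQ: "\<rho> ` P k \<subseteq> Q" and fin: "finite (\<rho> ` P k)" and ind: "indecomposable le ({#k#}, \<rho>)"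
  shows "\<exists>t. tree_in Q t \<and> sle (F t) (k, \<rho>) \<and> sle (k, \<rho>) (F t)"
proof (cases k)
  case 0
  define q where "q = \<rho> {#}"
  have qQ: "q \<in> Q" using vQ 0 unfolding q_def by (auto simp: P_0)
  have lq: "le q (\<rho> {#})" "le (\<rho> {#}) q" using le_refl[OF qQ] unfolding q_def by simp_all
  have e1: "emb le (\<lambda>_. q) {{#}} \<rho> {{#}}"
    unfolding emb_def by (rule exI[of _ id]) (simp add: strict_mono_on_def lq)
  have e2: "emb le \<rho> {{#}} (\<lambda>_. q) {{#}}"
    unfolding emb_def by (rule exI[of _ id]) (simp add: strict_mono_on_def lq)
  have FL: "F (Leaf q) = (0, \<lambda>_. q)" by simp
  have "sle (F (Leaf q)) (k, \<rho>)" unfolding FL fst_conv snd_conv 0 P_0 by (rule e1)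
  moreover have "sle (k, \<rho>) (F (Leaf q))" unfolding FL fst_conv snd_conv 0 P_0 by (rule e2)
  moreover have "tree_in Q (Leaf q)" using qQ by (rule tree_in.intros)
  ultimately show ?thesis by blast
next
  case (Suc h)
  define R where "R = \<rho> ` P k"
  have Rf: "finite R" and RQ: "R \<subseteq> Q" using fin vQ unfolding R_def by auto
  obtain t0 N Ls where t0: "t0 \<in> Can (Suc h) R" "sle (F t0) (Suc h, \<rho>)"
     "emb le \<rho> (\<Union>n\<in>{N..}. Blk h n) (snd (F t0)) (P (fst (F t0)))"
    using step[OF Rf RQ _ G[OF Rf RQ]] unfolding R_def Suc by blast
  have tin: "tree_in Q t0" using Can_tree_in[OF t0(1)] tree_in_mono RQ by blast
  have tail: "emb le \<rho> (P (Suc h)) \<rho> (\<Union>n\<in>{N..}. Blk h n)"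
  proof (cases "N = 0")
    case True
    have "(\<Union>n\<in>{N..}. Blk h n) = P (Suc h)" unfolding True P_Suc_Blk by simp
    then show ?thesis using emb_refl vQ unfolding Suc by simp
  next
    case False
    define d where "d = replicate_mset N h"
    have dP: "d \<in> P (Suc h)" "d \<noteq> {#}" unfolding d_def using False by (auto simp: P_def)
    have "emb le \<rho> (P (Suc h)) \<rho> {x\<in>P (Suc h). d \<le> x}" using ind dP unfolding Suc ind_iff by blast
    moreover have sub: "{x\<in>P (Suc h). d \<le> x} \<subseteq> (\<Union>n\<in>{N..}. Blk h n)"
    proof
      fix x assume x: "x \<in> {x\<in>P (Suc h). d \<le> x}"
      have xd: "x = replicate_mset (count x h) h + filter_mset (\<lambda>y. y < h) x" "filter_mset (\<lambda>y. y < h) x \<in> P h"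
        using P_Suc_decomp x by auto
      have "replicate_mset N h + {#} \<le> replicate_mset (count x h) h + filter_mset (\<lambda>y. y < h) x"
        using x xd(1) unfolding d_def by simp
      then have "N \<le> count x h" unfolding rep_le[OF empty_P xd(2)] by auto
      moreover have "x \<in> Blk h (count x h)" unfolding Blk_def sh_def using xd by (metis image_eqI)
      ultimately show "x \<in> (\<Union>n\<in>{N..}. Blk h n)" by blast
    qed
    ultimately show ?thesis by (rule emb_mono[OF _ subset_refl])
  qed
  have "sle (k, \<rho>) (F t0)" unfolding Suc fst_conv snd_conv by (rule emb_trans[OF tail t0(3)])
  then show ?thesis using tin t0(2) Suc by blast
qed

end


definition fmap :: "'q tree \<Rightarrow> 'q tseq" where
  "fmap t = ({#fst (F t)#}, restrict (snd (F t)) {..<{#fst (F t)#}})"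

lemma seq_le_emb: "seq_le le a b = emb le (seq_fun a) {..<seq_len a} (seq_fun b) {..<seq_len b}"
  unfolding seq_le_def emb_def by simp

lemma fmap_len[simp]: "seq_len (fmap t) = {#fst (F t)#}" by (simp add: fmap_def seq_len_def)
lemma fmap_fun: "x \<in> P (fst (F t)) \<Longrightarrow> seq_fun (fmap t) x = snd (F t) x"
  by (simp add: fmap_def seq_fun_def P_lessThan)

lemma fmap_le_iff: "seq_le le (fmap s) (fmap t) = emb le (snd (F s)) (P (fst (F s))) (snd (F t)) (P (fst (F t)))"
proof -
  have "seq_le le (fmap s) (fmap t) = emb le (seq_fun (fmap s)) (P (fst (F s))) (seq_fun (fmap t)) (P (fst (F t)))"
    unfolding seq_le_emb fmap_len P_lessThan ..
  also have "\<dots> = emb le (snd (F s)) (P (fst (F s))) (seq_fun (fmap t)) (P (fst (F t)))"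
    by (rule emb_cong) (rule fmap_fun)
  also have "\<dots> = emb le (snd (F s)) (P (fst (F s))) (snd (F t)) (P (fst (F t)))"
    by (rule emb_cong2) (rule fmap_fun)
  finally show ?thesis .
qed

lemma fmap_le_iff1:
  assumes "seq_len a = {#k#}"
  shows "seq_le le (fmap s) a = emb le (snd (F s)) (P (fst (F s))) (seq_fun a) (P k)"
proof -
  have "seq_le le (fmap s) a = emb le (seq_fun (fmap s)) (P (fst (F s))) (seq_fun a) (P k)"
    unfolding seq_le_emb fmap_len P_lessThan assms ..
  also have "\<dots> = emb le (snd (F s)) (P (fst (F s))) (seq_fun a) (P k)"
    by (rule emb_cong) (rule fmap_fun)
  finally show ?thesis .
qed

lemma fmap_le_iff2:
  assumes "seq_len a = {#k#}"
  shows "seq_le le a (fmap s) = emb le (seq_fun a) (P k) (snd (F s)) (P (fst (F s)))"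
proof -
  have "seq_le le a (fmap s) = emb le (seq_fun a) (P k) (seq_fun (fmap s)) (P (fst (F s)))"
    unfolding seq_le_emb fmap_len P_lessThan assms ..
  also have "\<dots> = emb le (seq_fun a) (P k) (snd (F s)) (P (fst (F s)))"
    by (rule emb_cong2) (rule fmap_fun)
  finally show ?thesis .
qed

lemma ind_restrict:
  "indecomposable le ({#h#}, restrict \<sigma> {..<{#h#}}) = indecomposable le ({#h#}, \<sigma>)"
proof -
  have "emb le (restrict \<sigma> {..<{#h#}}) (P h) (restrict \<sigma> {..<{#h#}}) {x \<in> P h. d \<le> x}
      = emb le \<sigma> (P h) (restrict \<sigma> {..<{#h#}}) {x \<in> P h. d \<le> x}" for d
    by (rule emb_cong) (simp add: P_lessThan[symmetric])
  moreover have "emb le \<sigma> (P h) (restrict \<sigma> {..<{#h#}}) {x \<in> P h. d \<le> x}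
      = emb le \<sigma> (P h) \<sigma> {x \<in> P h. d \<le> x}" for d
    by (rule emb_cong2) (simp add: P_lessThan[symmetric])
  ultimately have "emb le (restrict \<sigma> {..<{#h#}}) (P h) (restrict \<sigma> {..<{#h#}}) {x \<in> P h. d \<le> x}
      = emb le \<sigma> (P h) \<sigma> {x \<in> P h. d \<le> x}" for d by simp
  then show ?thesis unfolding ind_iff by simp
qed

context qo begin

lemma seq_le_trans: "seq_le le a b \<Longrightarrow> seq_le le b c \<Longrightarrow> seq_le le a c"
  unfolding seq_le_emb by (rule emb_trans)

lemma fmap_iF: "tree_in Q t \<Longrightarrow> fmap t \<in> iF Q le"
proof -
  assume tin: "tree_in Q t"
  have v: "snd (F t) ` P (fst (F t)) \<subseteq> Q" using vq_F[OF tin] unfolding vq_def .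
  have "seq_fun (fmap t) \<in> {..<seq_len (fmap t)} \<rightarrow>\<^sub>E Q"
    unfolding fmap_def seq_fun_def seq_len_def fst_conv snd_conv P_lessThan restrict_PiE_iff using v by blast
  moreover have "seq_fun (fmap t) ` {..<seq_len (fmap t)} \<subseteq> lbl t"
    using F_range[OF tin] fmap_fun unfolding P_lessThan fmap_len by auto
  then have "finite (seq_fun (fmap t) ` {..<seq_len (fmap t)})" using finite_lbl finite_subset by blast
  moreover have "indecomposable le (fmap t)"
    unfolding fmap_def ind_restrict by (rule F_ind[OF tin])
  ultimately show ?thesis unfolding iF_def by simp
qed

lemma iF_props:
  assumes a: "a \<in> iF Q le"
  shows "\<exists>k. seq_len a = {#k#} \<and> seq_fun a ` P k \<subseteq> Q \<and> finite (seq_fun a ` P k) \<and>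
    indecomposable le ({#k#}, seq_fun a)"
proof -
  have ap: "a = (seq_len a, seq_fun a)" by (simp add: seq_len_def seq_fun_def)
  have ind: "indecomposable le (seq_len a, seq_fun a)" using a ap unfolding iF_def by simp
  obtain k where k: "seq_len a = {#k#}" using ind_len[OF ind] a unfolding iF_def by blast
  show ?thesis using a k ind unfolding iF_def P_lessThan[symmetric] by (auto simp: PiE_iff)
qed

lemma ex_tree:
  assumes a: "a \<in> iF Q le"
  shows "\<exists>t. tree_in Q t \<and> seq_le le (fmap t) a \<and> seq_le le a (fmap t)"
proof -
  obtain k where k: "seq_len a = {#k#}" "seq_fun a ` P k \<subseteq> Q" "finite (seq_fun a ` P k)"
    "indecomposable le ({#k#}, seq_fun a)" using iF_props[OF a] by blast
  obtain t where "tree_in Q t" "sle (F t) (k, seq_fun a)" "sle (k, seq_fun a) (F t)"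
    using iv[OF k(2,3,4)] by blast
  then show ?thesis unfolding fmap_le_iff1[OF k(1)] fmap_le_iff2[OF k(1)] by auto
qed

lemma tree_iff: "tree_in Q s \<Longrightarrow> tree_in Q t \<Longrightarrow> tree_le le s t \<longleftrightarrow> seq_le le (fmap s) (fmap t)"
  unfolding fmap_le_iff using tree_le_sle sle_tree_le by blast

theorem main:
  "\<exists>f g. f \<in> Tf Q \<rightarrow> iF Q le \<and> g \<in> iF Q le \<rightarrow> Tf Q \<and>
           (\<forall>s\<in>Tf Q. \<forall>t\<in>Tf Q. tree_le le s t \<longleftrightarrow> seq_le le (f s) (f t)) \<and>
           (\<forall>a\<in>iF Q le. \<forall>b\<in>iF Q le. seq_le le a b \<longleftrightarrow> tree_le le (g a) (g b)) \<and>
           (\<forall>t\<in>Tf Q. tree_le le (g (f t)) t \<and> tree_le le t (g (f t))) \<and>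
           (\<forall>a\<in>iF Q le. seq_le le (f (g a)) a \<and> seq_le le a (f (g a)))"
proof -
  define g where "g a = (SOME t. tree_in Q t \<and> seq_le le (fmap t) a \<and> seq_le le a (fmap t))" for a
  have g: "tree_in Q (g a) \<and> seq_le le (fmap (g a)) a \<and> seq_le le a (fmap (g a))" if "a \<in> iF Q le" for a
    unfolding g_def by (rule someI_ex[OF ex_tree[OF that]])
  have 1: "fmap \<in> Tf Q \<rightarrow> iF Q le" using fmap_iF unfolding Tf_def by blast
  have 2: "g \<in> iF Q le \<rightarrow> Tf Q" using g unfolding Tf_def by blast
  have 3: "\<forall>s\<in>Tf Q. \<forall>t\<in>Tf Q. tree_le le s t \<longleftrightarrow> seq_le le (fmap s) (fmap t)"
    using tree_iff unfolding Tf_def by blast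
  have 4: "\<forall>a\<in>iF Q le. \<forall>b\<in>iF Q le. seq_le le a b \<longleftrightarrow> tree_le le (g a) (g b)"
  proof (intro ballI)
    fix a b assume a: "a \<in> iF Q le" and b: "b \<in> iF Q le"
    have "seq_le le a b \<longleftrightarrow> seq_le le (fmap (g a)) (fmap (g b))"
      using g[OF a] g[OF b] seq_le_trans by blast
    also have "\<dots> \<longleftrightarrow> tree_le le (g a) (g b)" using tree_iff g[OF a] g[OF b] by blast
    finally show "seq_le le a b \<longleftrightarrow> tree_le le (g a) (g b)" .
  qed
  have 5: "\<forall>t\<in>Tf Q. tree_le le (g (fmap t)) t \<and> tree_le le t (g (fmap t))"
  proof
    fix t assume "t \<in> Tf Q"
    then have t: "tree_in Q t" unfolding Tf_def by simp
    have gf: "tree_in Q (g (fmap t)) \<and> seq_le le (fmap (g (fmap t))) (fmap t) \<and> seq_le le (fmap t) (fmap (g (fmap t)))"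
      using g[OF fmap_iF[OF t]] .
    then show "tree_le le (g (fmap t)) t \<and> tree_le le t (g (fmap t))" using tree_iff t by blast
  qed
  have 6: "\<forall>a\<in>iF Q le. seq_le le (fmap (g a)) a \<and> seq_le le a (fmap (g a))" using g by blast
  show ?thesis using 1 2 3 4 5 6 by blast
qed

end


lemma tree_le_transfer1:
  assumes "\<And>x y. x \<in> Q \<Longrightarrow> y \<in> Q \<Longrightarrow> le x y \<Longrightarrow> le' x y"
  shows "tree_le le s t \<Longrightarrow> tree_in Q s \<Longrightarrow> tree_in Q t \<Longrightarrow> tree_le le' s t"
proof (induction rule: tree_le.induct)
  case (leaf_leaf x y)
  then show ?case using assms by (auto simp: tree_in_Leaf intro: tree_le.intros)
next
  case (leaf_node t ts x)
  have "tree_in Q t" using leaf_node(5,1) unfolding tree_in_Node by blast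
  then have "tree_le le' (Leaf x) t" using leaf_node by blast
  then show ?case by (rule tree_le.leaf_node[OF leaf_node(1)])
next
  case (node_node ss ts)
  have "\<forall>s. s |\<in>| ss \<longrightarrow> (\<exists>t. t |\<in>| ts \<and> tree_le le' s t)"
  proof (intro allI impI)
    fix s assume s: "s |\<in>| ss"
    obtain t where t: "t |\<in>| ts" "tree_in Q s \<Longrightarrow> tree_in Q t \<Longrightarrow> tree_le le' s t"
      using node_node(1) s by blast
    have "tree_in Q s" "tree_in Q t" using node_node(2,3) s t(1) unfolding tree_in_Node by blast+
    then show "\<exists>t. t |\<in>| ts \<and> tree_le le' s t" using t by blast
  qed
  then show ?case by (rule tree_le.node_node)
qed

lemma tree_le_transfer2:
  assumes "\<And>x y. le' x y \<Longrightarrow> le x y"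
  shows "tree_le le' s t \<Longrightarrow> tree_le le s t"
proof (induction rule: tree_le.induct)
  case (leaf_leaf x y) then show ?case using assms by (auto intro: tree_le.intros)
next
  case (leaf_node t ts x) then show ?case by (auto intro: tree_le.intros)
next
  case (node_node ss ts) then show ?case by (auto intro!: tree_le.intros)
qed

lemma seq_le_transfer:
  assumes "\<And>x y. x \<in> Q \<Longrightarrow> y \<in> Q \<Longrightarrow> le x y = le' x y"
    and "seq_fun a ` {..<seq_len a} \<subseteq> Q" "seq_fun b ` {..<seq_len b} \<subseteq> Q"
  shows "seq_le le a b = seq_le le' a b"
  unfolding seq_le_def
proof (intro iffI; elim exE conjE)
  fix f assume f: "strict_mono_on {..<seq_len a} f" "f ` {..<seq_len a} \<subseteq> {..<seq_len b}"
    "\<forall>i\<in>{..<seq_len a}. le (seq_fun a i) (seq_fun b (f i))"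
  have "\<forall>i\<in>{..<seq_len a}. le' (seq_fun a i) (seq_fun b (f i))"
  proof
    fix i assume i: "i \<in> {..<seq_len a}"
    then have "seq_fun a i \<in> Q" "seq_fun b (f i) \<in> Q" using assms(2,3) f(2) by blast+
    then show "le' (seq_fun a i) (seq_fun b (f i))" using f(3) i assms(1) by blast
  qed
  then show "\<exists>f. strict_mono_on {..<seq_len a} f \<and> f ` {..<seq_len a} \<subseteq> {..<seq_len b} \<and>
       (\<forall>i\<in>{..<seq_len a}. le' (seq_fun a i) (seq_fun b (f i)))" using f by blast
next
  fix f assume f: "strict_mono_on {..<seq_len a} f" "f ` {..<seq_len a} \<subseteq> {..<seq_len b}"
    "\<forall>i\<in>{..<seq_len a}. le' (seq_fun a i) (seq_fun b (f i))"
  have "\<forall>i\<in>{..<seq_len a}. le (seq_fun a i) (seq_fun b (f i))"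
  proof
    fix i assume i: "i \<in> {..<seq_len a}"
    then have "seq_fun a i \<in> Q" "seq_fun b (f i) \<in> Q" using assms(2,3) f(2) by blast+
    then show "le (seq_fun a i) (seq_fun b (f i))" using f(3) i assms(1) by blast
  qed
  then show "\<exists>f. strict_mono_on {..<seq_len a} f \<and> f ` {..<seq_len a} \<subseteq> {..<seq_len b} \<and>
       (\<forall>i\<in>{..<seq_len a}. le (seq_fun a i) (seq_fun b (f i)))" using f by blast
qed

lemma ind_transfer:
  assumes "\<And>x y. x \<in> Q \<Longrightarrow> y \<in> Q \<Longrightarrow> le x y = le' x y"
    and v: "seq_fun a ` {..<seq_len a} \<subseteq> Q"
  shows "indecomposable le a = indecomposable le' a"
proof -
  have "(\<forall>i\<in>{..<seq_len a}. le (seq_fun a i) (seq_fun a (f i))) = (\<forall>i\<in>{..<seq_len a}. le' (seq_fun a i) (seq_fun a (f i)))"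
    if "f ` {..<seq_len a} \<subseteq> {d..<seq_len a}" for f d
  proof -
    have "seq_fun a i \<in> Q \<and> seq_fun a (f i) \<in> Q" if i: "i \<in> {..<seq_len a}" for i
    proof -
      have "f i \<in> {..<seq_len a}" using i \<open>f ` {..<seq_len a} \<subseteq> {d..<seq_len a}\<close> by auto
      then show ?thesis using v i by blast
    qed
    then show ?thesis using assms(1) by blast
  qed
  then show ?thesis unfolding indecomposable_def by metis
qed

theorem theorem4p26:
  fixes Q :: "'q set" and le :: "'q \<Rightarrow> 'q \<Rightarrow> bool"
  assumes nonempty: "Q \<noteq> {}"
    and refl: "\<forall>x\<in>Q. le x x"
    and trans: "\<forall>x\<in>Q. \<forall>y\<in>Q. \<forall>z\<in>Q. le x y \<longrightarrow> le y z \<longrightarrow> le x z"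
  shows "\<exists>f g. f \<in> Tf Q \<rightarrow> iF Q le \<and> g \<in> iF Q le \<rightarrow> Tf Q \<and>
           (\<forall>s\<in>Tf Q. \<forall>t\<in>Tf Q. tree_le le s t \<longleftrightarrow> seq_le le (f s) (f t)) \<and>
           (\<forall>a\<in>iF Q le. \<forall>b\<in>iF Q le. seq_le le a b \<longleftrightarrow> tree_le le (g a) (g b)) \<and>
           (\<forall>t\<in>Tf Q. tree_le le (g (f t)) t \<and> tree_le le t (g (f t))) \<and>
           (\<forall>a\<in>iF Q le. seq_le le (f (g a)) a \<and> seq_le le a (f (g a)))"
proof -
  define le' where "le' x y \<longleftrightarrow> x \<in> Q \<and> y \<in> Q \<and> le x y" for x y
  interpret q: qo Q le'
  proof
    fix x y z assume "le' x y" "le' y z" then show "le' x z" using trans unfolding le'_def by blast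
  next
    fix x assume "x \<in> Q" then show "le' x x" using refl unfolding le'_def by blast
  next
    fix x y assume "le' x y" then show "x \<in> Q \<and> y \<in> Q" unfolding le'_def by blast
  qed
  have eqQ: "\<And>x y. x \<in> Q \<Longrightarrow> y \<in> Q \<Longrightarrow> le x y = le' x y" unfolding le'_def by blast
  have iFv: "seq_fun a ` {..<seq_len a} \<subseteq> Q" if "a \<in> iF Q le'" for a
    using that unfolding iF_def by (auto simp: PiE_iff)
  have iFeq: "iF Q le = iF Q le'"
  proof -
    have "indecomposable le a = indecomposable le' a" if "seq_fun a \<in> {..<seq_len a} \<rightarrow>\<^sub>E Q" for a
      by (rule ind_transfer[OF eqQ]) (use that in \<open>auto simp: PiE_iff\<close>)
    then show ?thesis unfolding iF_def by blast
  qed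
  have teq: "tree_le le s t = tree_le le' s t" if "s \<in> Tf Q" "t \<in> Tf Q" for s t
    using tree_le_transfer1[of Q le le' s t] tree_le_transfer2[of le' le s t] that eqQ
    unfolding Tf_def le'_def by blast
  obtain f g where fg: "f \<in> Tf Q \<rightarrow> iF Q le'" "g \<in> iF Q le' \<rightarrow> Tf Q"
    "\<forall>s\<in>Tf Q. \<forall>t\<in>Tf Q. tree_le le' s t \<longleftrightarrow> seq_le le' (f s) (f t)"
    "\<forall>a\<in>iF Q le'. \<forall>b\<in>iF Q le'. seq_le le' a b \<longleftrightarrow> tree_le le' (g a) (g b)"
    "\<forall>t\<in>Tf Q. tree_le le' (g (f t)) t \<and> tree_le le' t (g (f t))"
    "\<forall>a\<in>iF Q le'. seq_le le' (f (g a)) a \<and> seq_le le' a (f (g a))"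
    using q.main by blast
  have seq: "seq_le le a b = seq_le le' a b" if "a \<in> iF Q le'" "b \<in> iF Q le'" for a b
    by (rule seq_le_transfer[OF eqQ iFv[OF that(1)] iFv[OF that(2)]])
  have fi: "f t \<in> iF Q le'" if "t \<in> Tf Q" for t using fg(1) that by blast
  have gi: "g a \<in> Tf Q" if "a \<in> iF Q le'" for a using fg(2) that by blast
  show ?thesis
  proof (intro exI[of _ f] exI[of _ g] conjI)
    show "f \<in> Tf Q \<rightarrow> iF Q le" using fg(1) iFeq by simp
    show "g \<in> iF Q le \<rightarrow> Tf Q" using fg(2) iFeq by simp
    show "\<forall>s\<in>Tf Q. \<forall>t\<in>Tf Q. tree_le le s t \<longleftrightarrow> seq_le le (f s) (f t)"
      using fg(3) teq seq fi by simp
    show "\<forall>a\<in>iF Q le. \<forall>b\<in>iF Q le. seq_le le a b \<longleftrightarrow> tree_le le (g a) (g b)"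
      using fg(4) teq seq gi iFeq by simp
    show "\<forall>t\<in>Tf Q. tree_le le (g (f t)) t \<and> tree_le le t (g (f t))"
      using fg(5) teq gi fi by simp
    show "\<forall>a\<in>iF Q le. seq_le le (f (g a)) a \<and> seq_le le a (f (g a))"
      using fg(6) seq fi gi iFeq by simp
  qed
qed


end
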